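(* There is an absolute constant $C>0$ such that for every $p\in(0,1/2]$, every simple shape $\tau$ and every even integer $t\ge2$, with $\mathbf M_\tau$ the graph matrix of $\tau$ for the $p$-biased random graph, $$\mathbb E\|\mathbf M_\tau\|_{2t}^{2t}\le\Big(n^{|V(\tau)|}(Ct)^{t|E(\tau)|}|V(\tau)|^{t|V(\tau)|}\Big)\max_{U_\tau\cap V_\tau\subseteq S\subseteq V(\tau)}\Big(\frac{1-p}{p}\Big)^{t|E(S)|}n^{t(|V(\tau)|-|S|)}.$$
   Context: $p$-biased random graph: variables $G_{i,j}=G_{j,i}$, $i\ne j\in[n]$, independent, each equal to $-\sqrt{(1-p)/p}$ with probability $p$ and $\sqrt{p/(1-p)}$ with probability $1-p$. A shape $\tau=(V(\tau),E(\tau),U_\tau,V_\tau)$ is a finite graph with two ordered subsets $U_\tau,V_\tau\subseteq V(\tau)$; a realization is an injective $\varphi:V(\tau)\to[n]$; $\mathcal I$ is the set of tuples of distinct elements of $[n]$ (including the empty tuple); $\mathbf M_\tau\in\mathbb R^{\mathcal I\times\mathcal I}$ has $\mathbf M_\tau[I,J]=\sum_\varphi\prod_{\{u,v\}\in E(\tau)}G_{\varphi(u),\varphi(v)}$ over realizations with $\varphi(U_\tau)=I,\varphi(V_\tau)=J$ as ordered tuples. A shape is simple if $V(\tau)=U_\tau\cup V_\tau$ and every edge has both endpoints in $U_\tau$ or both endpoints in $V_\tau$. For $S\subseteq V(\tau)$, $E(S)$ is the set of edges with both endpoints in $S$. $\|\mathbf M\|_{2t}^{2t}=\operatorname{tr}((\mathbf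 M\mathbf M^\intercal)^t)$. *)

theory Defs
  imports "HOL-Probability.Probability"
begin

definition pairs_n :: "nat \<Rightarrow> nat set set" where
  "pairs_n n = {e. e \<subseteq> {..<n} \<and> card e = 2}"

text \<open>The p-biased random graph: an independent Bernoulli(p) bit for each pair.
  The bit True (probability p) means the entry -sqrt((1-p)/p), False (probability 1-p)
  means sqrt(p/(1-p)).\<close>
definition rg_pmf :: "nat \<Rightarrow> real \<Rightarrow> (nat set \<Rightarrow> bool) pmf" where
  "rg_pmf n p = Pi_pmf (pairs_n n) False (\<lambda>_. bernoulli_pmf p)"

definition Gval :: "real \<Rightarrow> (nat set \<Rightarrow> bool) \<Rightarrow> nat set \<Rightarrow> real" where
  "Gval p X e = (if X e then - sqrt ((1 - p) / p) else sqrt (p / (1 - p)))"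

text \<open>Shapes: vertex set (finite set of naturals), edge set (2-element subsets),
  and two ordered subsets U, V given as distinct lists.\<close>
record shape =
  sV :: "nat set"
  sE :: "nat set set"
  sU :: "nat list"
  sW :: "nat list"

definition is_shape :: "shape \<Rightarrow> bool" where
  "is_shape \<tau> \<longleftrightarrow> finite (sV \<tau>) \<and> (\<forall>e\<in>sE \<tau>. e \<subseteq> sV \<tau> \<and> card e = 2)
     \<and> distinct (sU \<tau>) \<and> distinct (sW \<tau>) \<and> set (sU \<tau>) \<subseteq> sV \<tau> \<and> set (sW \<tau>) \<subseteq> sV \<tau>"

definition simple_shape :: "shape \<Rightarrow> bool" where
  "simple_shape \<tau> \<longleftrightarrow> is_shape \<tau> \<and> sV \<tau> = set (sU \<tau>) \<union> set (sW \<tau>)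
     \<and> (\<forall>e\<in>sE \<tau>. e \<subseteq> set (sU \<tau>) \<or> e \<subseteq> set (sW \<tau>))"

definition edges_in :: "shape \<Rightarrow> nat set \<Rightarrow> nat set set" where
  "edges_in \<tau> S = {e \<in> sE \<tau>. e \<subseteq> S}"

definition tuples :: "nat \<Rightarrow> nat list set" where
  "tuples n = {xs. distinct xs \<and> set xs \<subseteq> {..<n}}"

definition realizations :: "nat \<Rightarrow> shape \<Rightarrow> (nat \<Rightarrow> nat) set" where
  "realizations n \<tau> = {\<phi> \<in> sV \<tau> \<rightarrow>\<^sub>E {..<n}. inj_on \<phi> (sV \<tau>)}"

definition graph_matrix :: "nat \<Rightarrow> shape \<Rightarrow> (nat set \<Rightarrow> real) \<Rightarrow> nat list \<Rightarrow> nat list \<Rightarrow> real" where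
  "graph_matrix n \<tau> G I J =
     (\<Sum>\<phi>\<in>{\<phi> \<in> realizations n \<tau>. map \<phi> (sU \<tau>) = I \<and> map \<phi> (sW \<tau>) = J}.
        \<Prod>e\<in>sE \<tau>. G (\<phi> ` e))"

definition mat_mult :: "'i set \<Rightarrow> ('i \<Rightarrow> 'i \<Rightarrow> real) \<Rightarrow> ('i \<Rightarrow> 'i \<Rightarrow> real) \<Rightarrow> 'i \<Rightarrow> 'i \<Rightarrow> real" where
  "mat_mult Idx A B i j = (\<Sum>k\<in>Idx. A i k * B k j)"

definition mat_transpose :: "('i \<Rightarrow> 'i \<Rightarrow> real) \<Rightarrow> 'i \<Rightarrow> 'i \<Rightarrow> real" where
  "mat_transpose A i j = A j i"

definition mat_id :: "'i \<Rightarrow> 'i \<Rightarrow> real" where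
  "mat_id i j = (if i = j then 1 else 0)"

fun mat_pow :: "'i set \<Rightarrow> ('i \<Rightarrow> 'i \<Rightarrow> real) \<Rightarrow> nat \<Rightarrow> 'i \<Rightarrow> 'i \<Rightarrow> real" where
  "mat_pow Idx A 0 = mat_id"
| "mat_pow Idx A (Suc k) = mat_mult Idx (mat_pow Idx A k) A"

definition mat_trace :: "'i set \<Rightarrow> ('i \<Rightarrow> 'i \<Rightarrow> real) \<Rightarrow> real" where
  "mat_trace Idx A = (\<Sum>i\<in>Idx. A i i)"

text \<open>Schatten norm power: ||M||_{2t}^{2t} = tr((M M^T)^t).\<close>
definition schatten_pow :: "'i set \<Rightarrow> ('i \<Rightarrow> 'i \<Rightarrow> real) \<Rightarrow> nat \<Rightarrow> real" where
  "schatten_pow Idx M t = mat_trace Idx (mat_pow Idx (mat_mult Idx M (mat_transpose M)) t)"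

end

theory Submission
  imports Defs
begin

lemma mp_one:
  assumes "finite Idx" "I \<in> Idx"
  shows "mat_pow Idx B 1 I J = B I J"
proof -
  have "(\<lambda>k. mat_id I k * B k J) = (\<lambda>k. if I = k then B I J else 0)"
    by (auto simp: mat_id_def)
  have "mat_pow Idx B 1 I J = (\<Sum>k\<in>Idx. mat_id I k * B k J)"
    by (simp add: mat_mult_def)
  also have "\<dots> = (\<Sum>k\<in>Idx. if I = k then B I J else 0)"
    unfolding \<open>(\<lambda>k. mat_id I k * B k J) = _\<close> ..
  also have "\<dots> = B I J" using assms by (simp add: sum.delta)
  finally show ?thesis .
qed

lemma block_trace_bound:
  fixes B :: "'i \<Rightarrow> 'i \<Rightarrow> real" and \<kappa> :: "'i \<Rightarrow> 'k"
  assumes fin: "finite Idx"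
    and blk: "\<And>I J. I \<in> Idx \<Longrightarrow> J \<in> Idx \<Longrightarrow> B I J \<noteq> 0 \<Longrightarrow> \<kappa> I = \<kappa> J"
    and t: "t \<ge> 2"
  shows "mat_trace Idx (mat_pow Idx B t)
     \<le> (\<Sum>\<sigma>\<in>\<kappa>`Idx. sqrt (\<Sum>I\<in>{I\<in>Idx. \<kappa> I = \<sigma>}. \<Sum>J\<in>{I\<in>Idx. \<kappa> I = \<sigma>}. (B I J)^2) ^ t)"
proof -
  define Is where "Is \<sigma> = {I\<in>Idx. \<kappa> I = \<sigma>}" for \<sigma>
  define Fsq where "Fsq \<sigma> = (\<Sum>I\<in>Is \<sigma>. \<Sum>J\<in>Is \<sigma>. (B I J)^2)" for \<sigma>
  define P where "P k = mat_pow Idx B k" for k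
  have finIs: "finite (Is \<sigma>)" for \<sigma> using fin by (simp add: Is_def)
  have red: "(\<Sum>K\<in>Idx. f K * B K J) = (\<Sum>K\<in>Is \<sigma>. f K * B K J)" if "J \<in> Is \<sigma>" for f J \<sigma>
  proof -
    have "(\<Sum>K\<in>Is \<sigma>. f K * B K J) = (\<Sum>K\<in>Idx. f K * B K J)"
    proof (rule sum.mono_neutral_left[OF fin])
      show "Is \<sigma> \<subseteq> Idx" by (auto simp: Is_def)
      show "\<forall>i\<in>Idx - Is \<sigma>. f i * B i J = 0"
        using that blk by (auto simp: Is_def)
    qed
    then show ?thesis by simp
  qed
  have PSuc: "P (Suc k) I J = (\<Sum>K\<in>Is \<sigma>. P k I K * B K J)" if "J \<in> Is \<sigma>" for k I J \<sigma>
    using red[OF that] by (simp add: P_def mat_mult_def)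
  have fbound: "(\<Sum>I\<in>Is \<sigma>. \<Sum>J\<in>Is \<sigma>. (P k I J)^2) \<le> Fsq \<sigma> ^ k" if "k \<ge> 1" for k \<sigma>
    using that
  proof (induction k rule: nat_induct_at_least)
    case base
    have P1: "P 1 I J = B I J" if "I \<in> Idx" for I J
      by (simp only: P_def mp_one[OF fin that])
    have P1': "P (Suc 0) I J = B I J" if "I \<in> Idx" for I J
      using P1[OF that] by simp
    have "(\<Sum>I\<in>Is \<sigma>. \<Sum>J\<in>Is \<sigma>. (P 1 I J)^2) = Fsq \<sigma>"
      unfolding Fsq_def
      by (intro sum.cong refl) (auto simp: P1 P1' Is_def)
    then show ?case by simp
  next
    case (Suc k)
    have ent: "(P (Suc k) I J)^2 \<le> (\<Sum>K\<in>Is \<sigma>. (P k I K)^2) * (\<Sum>K\<in>Is \<sigma>. (B K J)^2)"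
      if "J \<in> Is \<sigma>" for I J
      unfolding PSuc[OF that] by (rule Cauchy_Schwarz_ineq_sum)
    have "(\<Sum>I\<in>Is \<sigma>. \<Sum>J\<in>Is \<sigma>. (P (Suc k) I J)^2)
        \<le> (\<Sum>I\<in>Is \<sigma>. \<Sum>J\<in>Is \<sigma>. (\<Sum>K\<in>Is \<sigma>. (P k I K)^2) * (\<Sum>K\<in>Is \<sigma>. (B K J)^2))"
      by (intro sum_mono ent)
    also have "\<dots> = (\<Sum>I\<in>Is \<sigma>. \<Sum>K\<in>Is \<sigma>. (P k I K)^2) * Fsq \<sigma>"
    proof -
      have "Fsq \<sigma> = (\<Sum>J\<in>Is \<sigma>. \<Sum>K\<in>Is \<sigma>. (B K J)^2)"
        unfolding Fsq_def by (rule sum.swap)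
      then show ?thesis by (simp only: sum_product[symmetric])
    qed
    also have "\<dots> \<le> Fsq \<sigma> ^ k * Fsq \<sigma>"
      by (intro mult_right_mono Suc.IH) (auto simp: Fsq_def intro!: sum_nonneg)
    finally show ?case by (simp add: mult.commute)
  qed
  have tr: "(\<Sum>I\<in>Is \<sigma>. P t I I) \<le> sqrt (Fsq \<sigma>) ^ t" for \<sigma>
  proof -
    obtain s where s: "t = Suc s" "s \<ge> 1" using t by (cases t) auto
    have "(\<Sum>I\<in>Is \<sigma>. P t I I) = (\<Sum>I\<in>Is \<sigma>. \<Sum>K\<in>Is \<sigma>. P s I K * B K I)"
      using s by (intro sum.cong refl) (simp add: PSuc)
    also have "\<dots> = (\<Sum>x\<in>Is \<sigma> \<times> Is \<sigma>. P s (fst x) (snd x) * B (snd x) (fst x))"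
      by (simp add: sum.cartesian_product case_prod_unfold)
    finally have eq: "(\<Sum>I\<in>Is \<sigma>. P t I I) = \<dots>" .
    have "(\<Sum>I\<in>Is \<sigma>. P t I I)^2 \<le> (\<Sum>x\<in>Is \<sigma> \<times> Is \<sigma>. (P s (fst x) (snd x))^2) * (\<Sum>x\<in>Is \<sigma> \<times> Is \<sigma>. (B (snd x) (fst x))^2)"
      unfolding eq by (rule Cauchy_Schwarz_ineq_sum)
    also have "\<dots> = (\<Sum>I\<in>Is \<sigma>. \<Sum>J\<in>Is \<sigma>. (P s I J)^2) * Fsq \<sigma>"
    proof -
      have 1: "(\<Sum>x\<in>Is \<sigma> \<times> Is \<sigma>. (P s (fst x) (snd x))^2) = (\<Sum>I\<in>Is \<sigma>. \<Sum>J\<in>Is \<sigma>. (P s I J)^2)"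
        by (simp add: sum.cartesian_product case_prod_unfold)
      have "(\<Sum>x\<in>Is \<sigma> \<times> Is \<sigma>. (B (snd x) (fst x))^2) = (\<Sum>I\<in>Is \<sigma>. \<Sum>K\<in>Is \<sigma>. (B K I)^2)"
        by (simp add: sum.cartesian_product case_prod_unfold)
      also have "\<dots> = Fsq \<sigma>" unfolding Fsq_def by (rule sum.swap)
      finally show ?thesis using 1 by simp
    qed
    also have "\<dots> \<le> Fsq \<sigma> ^ s * Fsq \<sigma>"
      by (intro mult_right_mono fbound s) (auto simp: Fsq_def intro!: sum_nonneg)
    also have "\<dots> = (sqrt (Fsq \<sigma>) ^ t) ^ 2"
    proof -
      have F0: "Fsq \<sigma> \<ge> 0" by (auto simp: Fsq_def intro!: sum_nonneg)
      have "(sqrt (Fsq \<sigma>) ^ t) ^ 2 = (sqrt (Fsq \<sigma>) ^ 2) ^ t"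
        by (metis power_mult mult.commute)
      also have "\<dots> = Fsq \<sigma> ^ t" using F0 by simp
      finally show ?thesis using s by simp
    qed
    finally have "(\<Sum>I\<in>Is \<sigma>. P t I I)^2 \<le> (sqrt (Fsq \<sigma>) ^ t)^2" .
    then show ?thesis
    proof -
      have "0 \<le> sqrt (Fsq \<sigma>) ^ t" by (intro zero_le_power real_sqrt_ge_zero) (auto simp: Fsq_def intro!: sum_nonneg)
      with \<open>_ \<le> (sqrt (Fsq \<sigma>) ^ t)^2\<close> show ?thesis
        by (metis abs_le_square_iff abs_ge_self order_trans abs_of_nonneg)
    qed
  qed
  have "mat_trace Idx (mat_pow Idx B t) = (\<Sum>\<sigma>\<in>\<kappa>`Idx. \<Sum>I\<in>Is \<sigma>. P t I I)"
    unfolding mat_trace_def P_def Is_def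
    by (rule sum.group[symmetric]) (use fin in auto)
  also have "\<dots> \<le> (\<Sum>\<sigma>\<in>\<kappa>`Idx. sqrt (Fsq \<sigma>) ^ t)"
    by (intro sum_mono tr)
  finally show ?thesis by (simp add: Fsq_def Is_def)
qed

definition keyf :: "nat set \<Rightarrow> (nat \<Rightarrow> nat) \<Rightarrow> nat \<Rightarrow> nat option" where
  "keyf Z \<phi> = (\<lambda>z. if z \<in> Z then Some (\<phi> z) else None)"

definition kapL :: "nat set \<Rightarrow> nat list \<Rightarrow> nat list \<Rightarrow> nat \<Rightarrow> nat option" where
  "kapL Z U I = (\<lambda>z. if z \<in> Z then map_of (zip U I) z else None)"

lemma finite_tuples: "finite (tuples n)"
proof -
  have "tuples n \<subseteq> {xs. set xs \<subseteq> {..<n} \<and> length xs \<le> n}"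
  proof
    fix xs assume "xs \<in> tuples n"
    then have d: "distinct xs" and s: "set xs \<subseteq> {..<n}" by (auto simp: tuples_def)
    have "length xs = card (set xs)" using distinct_card[OF d] by simp
    also have "\<dots> \<le> card {..<n::nat}" by (rule card_mono[OF _ s]) simp
    finally show "xs \<in> {xs. set xs \<subseteq> {..<n} \<and> length xs \<le> n}" using s by simp
  qed
  then show ?thesis using finite_lists_length_le[of "{..<n}" n] finite_subset by auto
qed

lemma finite_realizations: "finite (sV \<tau>) \<Longrightarrow> finite (realizations n \<tau>)"
  unfolding realizations_def by (rule finite_subset[of _ "sV \<tau> \<rightarrow>\<^sub>E {..<n}"]) (auto intro: finite_PiE)

lemma card_realizations: "finite (sV \<tau>) \<Longrightarrow> card (realizations n \<tau>) \<le> n ^ card (sV \<tau>)"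
proof -
  assume f: "finite (sV \<tau>)"
  have "card (realizations n \<tau>) \<le> card (sV \<tau> \<rightarrow>\<^sub>E {..<n})"
    unfolding realizations_def by (rule card_mono) (use f in \<open>auto intro: finite_PiE\<close>)
  also have "\<dots> = n ^ card (sV \<tau>)" using f by (simp add: card_PiE prod_constant)
  finally show ?thesis .
qed

lemma map_real_tuples:
  assumes "\<phi> \<in> realizations n \<tau>" "distinct L" "set L \<subseteq> sV \<tau>"
  shows "map \<phi> L \<in> tuples n"
  using assms unfolding realizations_def tuples_def
  by (auto simp: distinct_map intro: inj_on_subset)

lemma kapL_map:
  assumes "distinct U" "Z \<subseteq> set U"
  shows "kapL Z U (map \<phi> U) = keyf Z \<phi>"
  using assms by (auto simp: kapL_def keyf_def map_of_zip_map fun_eq_iff)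

context
  fixes n :: nat and \<tau> :: shape and G :: "nat set \<Rightarrow> real"
  assumes simple: "simple_shape \<tau>"
begin

abbreviation "U \<equiv> sU \<tau>"
abbreviation "W \<equiv> sW \<tau>"
abbreviation "Z \<equiv> set (sU \<tau>) \<inter> set (sW \<tau>)"
abbreviation "R \<equiv> realizations n \<tau>"
abbreviation "Idx \<equiv> tuples n"
abbreviation "M \<equiv> graph_matrix n \<tau> G"
definition "wt \<phi> = (\<Prod>e\<in>sE \<tau>. G (\<phi> ` e))"

lemma shp: "is_shape \<tau>" "sV \<tau> = set U \<union> set W" using simple by (auto simp: simple_shape_def)

lemma finV: "finite (sV \<tau>)" using shp by (auto simp: is_shape_def)

lemma key_U: "\<phi> \<in> R \<Longrightarrow> kapL Z U (map \<phi> U) = keyf Z \<phi>"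
  using shp by (intro kapL_map) (auto simp: is_shape_def)

lemma key_W: "\<phi> \<in> R \<Longrightarrow> kapL Z W (map \<phi> W) = keyf Z \<phi>"
proof -
  have "kapL (set W \<inter> set U) W (map \<phi> W) = keyf (set W \<inter> set U) \<phi>"
    using shp by (intro kapL_map) (auto simp: is_shape_def)
  then show ?thesis by (simp add: Int_commute)
qed

lemma mapU_tuples: "\<phi> \<in> R \<Longrightarrow> map \<phi> U \<in> Idx"
  using shp by (intro map_real_tuples) (auto simp: is_shape_def)
lemma mapW_tuples: "\<phi> \<in> R \<Longrightarrow> map \<phi> W \<in> Idx"
  using shp by (intro map_real_tuples) (auto simp: is_shape_def)

lemma real_unique:
  assumes "\<phi> \<in> R" "\<psi> \<in> R" "map \<phi> U = map \<psi> U" "map \<phi> W = map \<psi> W"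
  shows "\<phi> = \<psi>"
proof (rule ext)
  fix x
  show "\<phi> x = \<psi> x"
  proof (cases "x \<in> sV \<tau>")
    case True
    then show ?thesis using assms(3,4) shp(2) by (auto simp: map_eq_conv)
  next
    case False
    then show ?thesis using assms(1,2) by (auto simp: realizations_def PiE_def extensional_def)
  qed
qed

lemma M_nz: "M I J \<noteq> 0 \<Longrightarrow> \<exists>\<phi>\<in>R. map \<phi> U = I \<and> map \<phi> W = J"
  unfolding graph_matrix_def by (metis (mono_tags, lifting) empty_Collect_eq sum.empty)

lemma blk:
  assumes "I \<in> Idx" "I' \<in> Idx" "mat_mult Idx M (mat_transpose M) I I' \<noteq> 0"
  shows "kapL Z U I = kapL Z U I'"
proof -
  obtain J where "M I J * M I' J \<noteq> 0"
    using assms(3) unfolding mat_mult_def mat_transpose_def by (meson sum.neutral)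
  then have "M I J \<noteq> 0" "M I' J \<noteq> 0" by auto
  then obtain \<phi> \<psi> where "\<phi>\<in>R" "map \<phi> U = I" "map \<phi> W = J" "\<psi>\<in>R" "map \<psi> U = I'" "map \<psi> W = J"
    using M_nz by metis
  then show ?thesis using key_U key_W by metis
qed

lemma M_sq: "(M I J)^2 = (\<Sum>\<phi>\<in>{\<phi>\<in>R. map \<phi> U = I \<and> map \<phi> W = J}. (wt \<phi>)^2)"
proof (cases "{\<phi>\<in>R. map \<phi> U = I \<and> map \<phi> W = J} = {}")
  case True
  show ?thesis unfolding graph_matrix_def wt_def by (simp only: True sum.empty) simp
next
  case False
  then obtain \<phi> where \<phi>: "\<phi> \<in> R" "map \<phi> U = I" "map \<phi> W = J" by auto
  then have "{\<phi>\<in>R. map \<phi> U = I \<and> map \<phi> W = J} = {\<phi>}" using real_unique by blast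
  then show ?thesis by (simp add: graph_matrix_def wt_def)
qed

lemma Y_eq:
  "(\<Sum>I\<in>{I\<in>Idx. kapL Z U I = \<sigma>}. \<Sum>J\<in>Idx. (M I J)^2) = (\<Sum>\<phi>\<in>{\<phi>\<in>R. keyf Z \<phi> = \<sigma>}. (wt \<phi>)^2)"
proof -
  let ?Is = "{I\<in>Idx. kapL Z U I = \<sigma>}"
  let ?S = "{\<phi>\<in>R. keyf Z \<phi> = \<sigma>}"
  let ?g = "\<lambda>\<phi>. (map \<phi> U, map \<phi> W)"
  have finS: "finite ?S" using finite_realizations[OF finV] by auto
  have finT: "finite (?Is \<times> Idx)" using finite_tuples by auto
  have gS: "?g ` ?S \<subseteq> ?Is \<times> Idx" using mapU_tuples mapW_tuples key_U by auto
  have "(\<Sum>I\<in>?Is. \<Sum>J\<in>Idx. (M I J)^2) = (\<Sum>x\<in>?Is \<times> Idx. (M (fst x) (snd x))^2)"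
    by (simp add: sum.cartesian_product case_prod_unfold)
  also have "\<dots> = (\<Sum>x\<in>?Is \<times> Idx. \<Sum>\<phi>\<in>{\<phi>\<in>?S. ?g \<phi> = x}. (wt \<phi>)^2)"
  proof (intro sum.cong refl)
    fix x assume x: "x \<in> ?Is \<times> Idx"
    have "{\<phi>\<in>R. map \<phi> U = fst x \<and> map \<phi> W = snd x} = {\<phi>\<in>?S. ?g \<phi> = x}"
      using x by (auto simp: prod_eq_iff key_U[symmetric])
    then show "(M (fst x) (snd x))^2 = (\<Sum>\<phi>\<in>{\<phi>\<in>?S. ?g \<phi> = x}. (wt \<phi>)^2)"
      by (simp add: M_sq)
  qed
  also have "\<dots> = (\<Sum>\<phi>\<in>?S. (wt \<phi>)^2)"
    by (rule sum.group[OF finS finT gS])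
  finally show ?thesis .
qed

lemma Fsq_le:
  "sqrt (\<Sum>I\<in>{I\<in>Idx. kapL Z U I = \<sigma>}. \<Sum>J\<in>{I\<in>Idx. kapL Z U I = \<sigma>}. (mat_mult Idx M (mat_transpose M) I J)^2)
    \<le> (\<Sum>I\<in>{I\<in>Idx. kapL Z U I = \<sigma>}. \<Sum>J\<in>Idx. (M I J)^2)"
proof -
  let ?Is = "{I\<in>Idx. kapL Z U I = \<sigma>}"
  define r where "r I = (\<Sum>J\<in>Idx. (M I J)^2)" for I
  have "(\<Sum>I\<in>?Is. \<Sum>J\<in>?Is. (mat_mult Idx M (mat_transpose M) I J)^2) \<le> (\<Sum>I\<in>?Is. \<Sum>J\<in>?Is. r I * r J)"
    unfolding mat_mult_def mat_transpose_def r_def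
    by (intro sum_mono Cauchy_Schwarz_ineq_sum)
  also have "\<dots> = (\<Sum>I\<in>?Is. r I)^2"
    by (simp add: power2_eq_square sum_product)
  finally have "sqrt (\<Sum>I\<in>?Is. \<Sum>J\<in>?Is. (mat_mult Idx M (mat_transpose M) I J)^2) \<le> sqrt ((\<Sum>I\<in>?Is. r I)^2)"
    using real_sqrt_le_mono by blast
  also have "\<dots> = (\<Sum>I\<in>?Is. r I)"
  proof -
    have "(\<Sum>I\<in>?Is. r I) \<ge> 0" by (auto simp: r_def intro!: sum_nonneg)
    then show ?thesis by simp
  qed
  finally show ?thesis unfolding r_def .
qed

lemma det_bound:
  assumes t: "t \<ge> 2"
  shows "schatten_pow Idx M t \<le> (\<Sum>\<sigma>\<in>keyf Z ` R. (\<Sum>\<phi>\<in>{\<phi>\<in>R. keyf Z \<phi> = \<sigma>}. (wt \<phi>)^2) ^ t)"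
proof -
  let ?B = "mat_mult Idx M (mat_transpose M)"
  let ?k = "kapL Z U"
  have "schatten_pow Idx M t = mat_trace Idx (mat_pow Idx ?B t)" unfolding schatten_pow_def ..
  also have "\<dots> \<le> (\<Sum>\<sigma>\<in>?k`Idx. sqrt (\<Sum>I\<in>{I\<in>Idx. ?k I = \<sigma>}. \<Sum>J\<in>{I\<in>Idx. ?k I = \<sigma>}. (?B I J)^2) ^ t)"
    by (rule block_trace_bound[OF finite_tuples _ t]) (rule blk)
  also have "\<dots> \<le> (\<Sum>\<sigma>\<in>?k`Idx. (\<Sum>\<phi>\<in>{\<phi>\<in>R. keyf Z \<phi> = \<sigma>}. (wt \<phi>)^2) ^ t)"
  proof (rule sum_mono)
    fix \<sigma> assume "\<sigma> \<in> ?k ` Idx"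
    have nn: "0 \<le> (\<Sum>I\<in>{I\<in>Idx. ?k I = \<sigma>}. \<Sum>J\<in>{I\<in>Idx. ?k I = \<sigma>}. (?B I J)^2)"
      by (intro sum_nonneg zero_le_power2)
    show "sqrt (\<Sum>I\<in>{I\<in>Idx. ?k I = \<sigma>}. \<Sum>J\<in>{I\<in>Idx. ?k I = \<sigma>}. (?B I J)^2) ^ t
        \<le> (\<Sum>\<phi>\<in>{\<phi>\<in>R. keyf Z \<phi> = \<sigma>}. (wt \<phi>)^2) ^ t"
      by (rule power_mono[OF Fsq_le[of \<sigma>, unfolded Y_eq] real_sqrt_ge_zero[OF nn]])
  qed
  also have "\<dots> = (\<Sum>\<sigma>\<in>keyf Z ` R. (\<Sum>\<phi>\<in>{\<phi>\<in>R. keyf Z \<phi> = \<sigma>}. (wt \<phi>)^2) ^ t)"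
  proof (rule sum.mono_neutral_right)
    show "finite (?k ` Idx)" using finite_tuples by auto
    show "keyf Z ` R \<subseteq> ?k ` Idx"
    proof
      fix x assume "x \<in> keyf Z ` R"
      then obtain \<phi> where "\<phi> \<in> R" "x = keyf Z \<phi>" by blast
      then have "x = ?k (map \<phi> U)" "map \<phi> U \<in> Idx" using key_U mapU_tuples by auto
      then show "x \<in> ?k ` Idx" by blast
    qed
    show "\<forall>i\<in>?k ` Idx - keyf Z ` R. (\<Sum>\<phi>\<in>{\<phi>\<in>R. keyf Z \<phi> = i}. (wt \<phi>)^2) ^ t = 0"
    proof
      fix i assume i: "i \<in> ?k ` Idx - keyf Z ` R"
      then have "i \<notin> keyf Z ` R" by blast
      then have "{\<phi>\<in>R. keyf Z \<phi> = i} = {}" by blast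
      then show "(\<Sum>\<phi>\<in>{\<phi>\<in>R. keyf Z \<phi> = i}. (wt \<phi>)^2) ^ t = 0"
        using t by (simp only: sum.empty) simp
    qed
  qed
  finally show ?thesis .
qed

lemma det_bound':
  assumes t: "t \<ge> 2"
  shows "schatten_pow Idx M t \<le> (\<Sum>\<sigma>\<in>keyf Z ` R. (\<Sum>\<phi>\<in>{\<phi>\<in>R. keyf Z \<phi> = \<sigma>}. (\<Prod>e\<in>sE \<tau>. G (\<phi> ` e))^2) ^ t)"
  using det_bound[OF t] unfolding wt_def .

end
lemma det_bound_glob:
  assumes "simple_shape \<tau>" "t \<ge> 2"
  shows "schatten_pow (tuples n) (graph_matrix n \<tau> G) t
    \<le> (\<Sum>\<sigma>\<in>keyf (set (sU \<tau>) \<inter> set (sW \<tau>)) ` realizations n \<tau>.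
          (\<Sum>\<phi>\<in>{\<phi>\<in>realizations n \<tau>. keyf (set (sU \<tau>) \<inter> set (sW \<tau>)) \<phi> = \<sigma>}. (\<Prod>e\<in>sE \<tau>. G (\<phi> ` e))^2) ^ t)"
  using det_bound'[OF assms(1,2)] .

definition mg :: "nat set \<Rightarrow> (nat \<Rightarrow> nat) \<Rightarrow> (nat \<Rightarrow> nat) \<Rightarrow> nat \<Rightarrow> nat" where
  "mg A g \<psi> = (\<lambda>x. if x \<in> A then \<psi> x else g x)"

definition hset :: "nat \<Rightarrow> (nat \<Rightarrow> nat) \<Rightarrow> nat set set \<Rightarrow> nat set \<Rightarrow> nat set set \<Rightarrow> (nat \<Rightarrow> nat) set" where
  "hset n g Q A H = {\<psi> \<in> A \<rightarrow>\<^sub>E {..<n}. \<forall>e\<in>H. mg A g \<psi> ` e \<in> Q}"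

lemma finite_hset: "finite A \<Longrightarrow> finite (hset n g Q A H)"
  unfolding hset_def by (rule finite_subset[of _ "A \<rightarrow>\<^sub>E {..<n}"]) (auto intro: finite_PiE)

lemma card_nbrs:
  assumes "finite Q" "\<forall>f\<in>Q. card f = 2" "card {f\<in>Q. c \<in> f} \<le> D"
  shows "finite {y. {c, y} \<in> Q} \<and> card {y. {c, y} \<in> Q} \<le> D"
proof -
  have inj: "inj_on (\<lambda>y. {c, y}) {y. {c, y} \<in> Q}"
  proof (rule inj_onI)
    fix y y' assume y: "y \<in> {y. {c, y} \<in> Q}" and y': "y' \<in> {y. {c, y} \<in> Q}" and eq: "{c, y} = {c, y'}"
    have "card {c, y} = 2" using y assms(2) by auto
    then have "y \<noteq> c" by (auto simp: card_insert_if)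
    moreover have "y \<in> {c, y'}" using eq by auto
    ultimately show "y = y'" by auto
  qed
  have sub: "(\<lambda>y. {c, y}) ` {y. {c, y} \<in> Q} \<subseteq> {f\<in>Q. c \<in> f}" by auto
  have fin: "finite {f\<in>Q. c \<in> f}" using assms(1) by auto
  have "finite {y. {c, y} \<in> Q}"
    using finite_imageD[OF finite_subset[OF sub fin] inj] .
  moreover have "card {y. {c, y} \<in> Q} \<le> D"
    using card_mono[OF fin sub] card_image[OF inj] assms(3) by linarith
  ultimately show ?thesis by blast
qed

lemma card_pairs:
  assumes "finite Q" "\<forall>f\<in>Q. card f = 2"
  shows "finite {(x, y). {x, y} \<in> Q} \<and> card {(x, y). {x, y} \<in> Q} \<le> 4 * card Q"
proof -
  have sub: "{(x, y). {x, y} \<in> Q} \<subseteq> (\<Union>f\<in>Q. f \<times> f)" by auto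
  have finf: "\<And>f. f \<in> Q \<Longrightarrow> finite f" using assms(2) by (metis card.infinite zero_neq_numeral)
  have fin: "finite (\<Union>f\<in>Q. f \<times> f)" using assms(1) finf by auto
  have "card (\<Union>f\<in>Q. f \<times> f) \<le> (\<Sum>f\<in>Q. card (f \<times> f))" by (rule card_UN_le[OF assms(1)])
  also have "\<dots> = (\<Sum>f\<in>Q. 4)" using assms(2) by (intro sum.cong) (auto simp: card_cartesian_product)
  finally have "card (\<Union>f\<in>Q. f \<times> f) \<le> 4 * card Q" by simp
  then show ?thesis using finite_subset[OF sub fin] card_mono[OF fin sub] by linarith
qed

lemma count_hom:
  fixes Q :: "nat set set" and g :: "nat \<Rightarrow> nat" and T W :: real
  assumes H: "finite H" "\<forall>e\<in>H. card e = 2"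
    and Q: "finite Q" "\<forall>f\<in>Q. card f = 2" "card Q \<le> L" "\<forall>x. card {f\<in>Q. x \<in> f} \<le> D"
    and DL: "real D \<le> T * W" "real L \<le> T * W^2" "T \<ge> 1" "W \<ge> 0"
    and A: "finite A"
  shows "real (card (hset n g Q A H)) \<le> real n ^ card (A - \<Union>H) * (4*T) ^ card H * W ^ card (A \<inter> \<Union>H)"
  using H(1) H(2) A
proof (induction H arbitrary: A rule: finite_induct)
  case empty
  have "hset n g Q A {} = A \<rightarrow>\<^sub>E {..<n}" by (simp add: hset_def)
  then show ?case using empty.prems by (simp add: card_PiE prod_constant)
next
  case (insert e H A)
  note IH = insert.IH
  obtain a b where e: "e = {a, b}" "a \<noteq> b" using insert.prems(1) by (auto simp: card_2_iff)
  have hH: "\<forall>e\<in>H. card e = 2" using insert.prems(1) by auto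
  have T0: "4 * T \<ge> 1" using DL by simp
  define bnd where "bnd A' = real n ^ card (A' - \<Union>H) * (4*T) ^ card H * W ^ card (A' \<inter> \<Union>H)" for A'
  have IH': "real (card (hset n g Q A' H)) \<le> bnd A'" if "finite A'" for A'
    unfolding bnd_def using IH[OF hH that] .
  have cardH: "card (insert e H) = Suc (card H)" using insert.hyps by simp
  have restr: "mg A g \<psi> ` e' = mg (A - B) g (restrict \<psi> (A - B)) ` e'"
    if "e' \<in> H" "B \<inter> \<Union>H = {}" for \<psi> B e'
    using that by (auto simp: mg_def image_def)
  have case2: "real (card (hset n g Q A (insert e H))) \<le> real n ^ card (A - \<Union>(insert e H)) * (4*T) ^ card (insert e H) * W ^ card (A \<inter> \<Union>(insert e H))"
    if cb: "e = {c, b'}" "c \<noteq> b'" "b' \<in> A" "b' \<notin> \<Union>H" "c \<notin> A \<or> c \<in> \<Union>H" for c b'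
  proof -
    define A' where "A' = A - {b'}"
    have finA': "finite A'" using insert.prems(2) by (simp add: A'_def)
    define S where "S = Sigma (hset n g Q A' H) (\<lambda>\<psi>'. {y. {mg A' g \<psi>' c, y} \<in> Q})"
    have sub: "hset n g Q A (insert e H) \<subseteq> (\<lambda>(\<psi>', y). \<psi>'(b' := y)) ` S"
    proof
      fix \<psi> assume \<psi>: "\<psi> \<in> hset n g Q A (insert e H)"
      define \<psi>' where "\<psi>' = restrict \<psi> A'"
      have "\<psi>' \<in> hset n g Q A' H"
        unfolding hset_def
      proof (intro CollectI conjI ballI)
        show "\<psi>' \<in> A' \<rightarrow>\<^sub>E {..<n}" using \<psi> by (auto simp: \<psi>'_def A'_def hset_def)
        fix e' assume "e' \<in> H"
        then have "mg A g \<psi> ` e' = mg A' g \<psi>' ` e'"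
          unfolding A'_def \<psi>'_def using restr[of e' "{b'}"] cb by auto
        then show "mg A' g \<psi>' ` e' \<in> Q" using \<psi> \<open>e' \<in> H\<close> by (auto simp: hset_def)
      qed
      moreover have "{mg A' g \<psi>' c, \<psi> b'} \<in> Q"
      proof -
        have "mg A g \<psi> ` e \<in> Q" using \<psi> by (auto simp: hset_def)
        moreover have "mg A g \<psi> ` e = {mg A' g \<psi>' c, \<psi> b'}"
          using cb by (auto simp: mg_def \<psi>'_def A'_def)
        ultimately show ?thesis by simp
      qed
      moreover have "\<psi> = \<psi>'(b' := \<psi> b')"
        using \<psi> cb by (auto simp: \<psi>'_def A'_def fun_eq_iff hset_def PiE_def extensional_def)
      ultimately show "\<psi> \<in> (\<lambda>(\<psi>', y). \<psi>'(b' := y)) ` S"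
        unfolding S_def by (intro image_eqI[of _ _ "(\<psi>', \<psi> b')"]) auto
    qed
    have nb: "finite {y. {c0, y} \<in> Q} \<and> card {y. {c0, y} \<in> Q} \<le> D" for c0
      by (rule card_nbrs[OF Q(1,2) Q(4)[rule_format]])
    have finS: "finite S" unfolding S_def using finite_hset[OF finA'] nb by auto
    have "card (hset n g Q A (insert e H)) \<le> card S"
      by (rule order_trans[OF card_mono[OF finite_imageI[OF finS] sub] card_image_le[OF finS]])
    also have "card S = (\<Sum>\<psi>'\<in>hset n g Q A' H. card {y. {mg A' g \<psi>' c, y} \<in> Q})"
      unfolding S_def by (rule card_SigmaI) (use finite_hset[OF finA'] nb in auto)
    also have "\<dots> \<le> card (hset n g Q A' H) * D"
      using sum_bounded_above[of "hset n g Q A' H" "\<lambda>\<psi>'. card {y. {mg A' g \<psi>' c, y} \<in> Q}" D] nb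
      by (simp add: mult.commute)
    finally have c1: "real (card (hset n g Q A (insert e H))) \<le> real (card (hset n g Q A' H)) * real D"
      by (metis of_nat_le_iff of_nat_mult)
    have c2: "real (card (hset n g Q A' H)) * real D \<le> bnd A' * (T * W)"
      using IH'[OF finA'] DL by (intro mult_mono) auto
    have eqd: "A' - \<Union>H = A - \<Union>(insert e H)" using cb by (auto simp: A'_def)
    have eqc: "card (A \<inter> \<Union>(insert e H)) = Suc (card (A' \<inter> \<Union>H))"
    proof -
      have "A \<inter> \<Union>(insert e H) = insert b' (A' \<inter> \<Union>H)" using cb by (auto simp: A'_def)
      moreover have "b' \<notin> A' \<inter> \<Union>H" by (simp add: A'_def)
      ultimately show ?thesis using finA' by simp
    qed
    have c3: "bnd A' * (T * W) \<le> real n ^ card (A - \<Union>(insert e H)) * (4*T) ^ card (insert e H) * W ^ card (A \<inter> \<Union>(insert e H))"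
    proof -
      let ?x = "real n ^ card (A - \<Union>(insert e H)) * (4*T) ^ card H * W ^ card (A' \<inter> \<Union>H)"
      have x0: "?x \<ge> 0" using DL by simp
      have "bnd A' * (T * W) = ?x * (T * W)" unfolding bnd_def eqd ..
      also have "\<dots> \<le> ?x * (4 * T * W)" using x0 DL by (intro mult_left_mono) auto
      also have "\<dots> = real n ^ card (A - \<Union>(insert e H)) * (4*T) ^ card (insert e H) * W ^ card (A \<inter> \<Union>(insert e H))"
        unfolding cardH eqc by (simp add: algebra_simps)
      finally show ?thesis .
    qed
    show ?thesis using c1 c2 c3 by linarith
  qed
  have case3: "real (card (hset n g Q A (insert e H))) \<le> real n ^ card (A - \<Union>(insert e H)) * (4*T) ^ card (insert e H) * W ^ card (A \<inter> \<Union>(insert e H))"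
    if cb: "a \<in> A" "a \<notin> \<Union>H" "b \<in> A" "b \<notin> \<Union>H"
  proof -
    define A' where "A' = A - {a, b}"
    have finA': "finite A'" using insert.prems(2) by (simp add: A'_def)
    define P2 where "P2 = {(x, y). {x, y} \<in> Q}"
    have P2: "finite P2" "card P2 \<le> 4 * card Q" using card_pairs[OF Q(1,2)] by (auto simp: P2_def)
    define S where "S = hset n g Q A' H \<times> P2"
    have sub: "hset n g Q A (insert e H) \<subseteq> (\<lambda>(\<psi>', xy). \<psi>'(a := fst xy, b := snd xy)) ` S"
    proof
      fix \<psi> assume \<psi>: "\<psi> \<in> hset n g Q A (insert e H)"
      define \<psi>' where "\<psi>' = restrict \<psi> A'"
      have "\<psi>' \<in> hset n g Q A' H"
        unfolding hset_def
      proof (intro CollectI conjI ballI)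
        show "\<psi>' \<in> A' \<rightarrow>\<^sub>E {..<n}" using \<psi> by (auto simp: \<psi>'_def A'_def hset_def)
        fix e' assume "e' \<in> H"
        then have "mg A g \<psi> ` e' = mg A' g \<psi>' ` e'"
          unfolding A'_def \<psi>'_def using restr[of e' "{a, b}"] cb by auto
        then show "mg A' g \<psi>' ` e' \<in> Q" using \<psi> \<open>e' \<in> H\<close> by (auto simp: hset_def)
      qed
      moreover have "(\<psi> a, \<psi> b) \<in> P2"
      proof -
        have "mg A g \<psi> ` e \<in> Q" using \<psi> by (auto simp: hset_def)
        moreover have "mg A g \<psi> ` e = {\<psi> a, \<psi> b}"
          using cb e by (auto simp: mg_def)
        ultimately show ?thesis by (simp add: P2_def)
      qed
      moreover have "\<psi> = \<psi>'(a := \<psi> a, b := \<psi> b)"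
        using \<psi> cb by (auto simp: \<psi>'_def A'_def fun_eq_iff hset_def PiE_def extensional_def)
      ultimately show "\<psi> \<in> (\<lambda>(\<psi>', xy). \<psi>'(a := fst xy, b := snd xy)) ` S"
        unfolding S_def by (intro image_eqI[of _ _ "(\<psi>', (\<psi> a, \<psi> b))"]) auto
    qed
    have finS: "finite S" unfolding S_def using finite_hset[OF finA'] P2 by auto
    have "card (hset n g Q A (insert e H)) \<le> card S"
      by (rule order_trans[OF card_mono[OF finite_imageI[OF finS] sub] card_image_le[OF finS]])
    also have "card S = card (hset n g Q A' H) * card P2"
      unfolding S_def by (rule card_cartesian_product)
    finally have c1: "real (card (hset n g Q A (insert e H))) \<le> real (card (hset n g Q A' H)) * real (card P2)"
      by (metis of_nat_le_iff of_nat_mult)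
    have "real (card P2) \<le> 4 * (T * W^2)" using P2(2) Q(3) DL(2)
      by (metis (mono_tags, opaque_lifting) le_trans mult_le_mono2 of_nat_le_iff of_nat_mult of_nat_numeral mult_left_mono order_trans of_nat_0_le_iff zero_le_numeral)
    then have c2: "real (card (hset n g Q A' H)) * real (card P2) \<le> bnd A' * (4 * (T * W^2))"
      using IH'[OF finA'] by (intro mult_mono) auto
    have eqd: "A' - \<Union>H = A - \<Union>(insert e H)" using cb e by (auto simp: A'_def)
    have eqc: "card (A \<inter> \<Union>(insert e H)) = Suc (Suc (card (A' \<inter> \<Union>H)))"
    proof -
      have "A \<inter> \<Union>(insert e H) = insert a (insert b (A' \<inter> \<Union>H))" using cb e by (auto simp: A'_def)
      moreover have "b \<notin> A' \<inter> \<Union>H" "a \<notin> insert b (A' \<inter> \<Union>H)" using e by (auto simp: A'_def)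
      ultimately show ?thesis using finA' by simp
    qed
    have c3: "bnd A' * (4 * (T * W^2)) = real n ^ card (A - \<Union>(insert e H)) * (4*T) ^ card (insert e H) * W ^ card (A \<inter> \<Union>(insert e H))"
      unfolding bnd_def eqd cardH eqc by (simp add: algebra_simps power2_eq_square)
    show ?thesis using c1 c2 c3 by linarith
  qed
  have case1: "real (card (hset n g Q A (insert e H))) \<le> real n ^ card (A - \<Union>(insert e H)) * (4*T) ^ card (insert e H) * W ^ card (A \<inter> \<Union>(insert e H))"
    if cb: "a \<notin> A \<or> a \<in> \<Union>H" "b \<notin> A \<or> b \<in> \<Union>H"
  proof -
    have "hset n g Q A (insert e H) \<subseteq> hset n g Q A H" by (auto simp: hset_def)
    then have "card (hset n g Q A (insert e H)) \<le> card (hset n g Q A H)"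
      by (rule card_mono[OF finite_hset[OF insert.prems(2)]])
    then have c1: "real (card (hset n g Q A (insert e H))) \<le> bnd A" using IH'[OF insert.prems(2)] by linarith
    have eqd: "A - \<Union>H = A - \<Union>(insert e H)" using cb e by auto
    have eqc: "A \<inter> \<Union>(insert e H) = A \<inter> \<Union>H" using cb e by auto
    have "bnd A \<le> real n ^ card (A - \<Union>H) * (4*T) ^ card H * W ^ card (A \<inter> \<Union>H) * (4 * T)"
    proof -
      have b0: "bnd A \<ge> 0" unfolding bnd_def using DL by simp
      show ?thesis using mult_left_mono[OF T0 b0] unfolding bnd_def by simp
    qed
    then show ?thesis using c1 unfolding eqd eqc cardH by (simp add: algebra_simps)
  qed
  show ?case
  proof (cases "a \<in> A \<and> a \<notin> \<Union>H")
    case True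
    show ?thesis
    proof (cases "b \<in> A \<and> b \<notin> \<Union>H")
      case True
      with \<open>a \<in> A \<and> a \<notin> \<Union>H\<close> show ?thesis using case3 by blast
    next
      case False
      then show ?thesis using True case2[of b a] e by (auto simp: insert_commute)
    qed
  next
    case False
    show ?thesis
    proof (cases "b \<in> A \<and> b \<notin> \<Union>H")
      case True
      then show ?thesis using False case2[of a b] e by auto
    next
      case False2: False
      then show ?thesis using False case1 by blast
    qed
  qed
qed

lemma finite_pairs_n: "finite (pairs_n n)"
  unfolding pairs_n_def by (rule finite_subset[of _ "Pow {..<n}"]) auto

lemma finite_set_rg: "finite (set_pmf (rg_pmf n p))"
proof -
  have "set_pmf (rg_pmf n p) = PiE_dflt (pairs_n n) False (set_pmf \<circ> (\<lambda>_. bernoulli_pmf p))"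
    unfolding rg_pmf_def by (rule set_Pi_pmf[OF finite_pairs_n])
  also have "finite \<dots>" by (intro finite_PiE_dflt finite_pairs_n) auto
  finally show ?thesis .
qed

lemma integrable_rg: "integrable (measure_pmf (rg_pmf n p)) (f :: _ \<Rightarrow> real)"
  by (rule integrable_measure_pmf_finite[OF finite_set_rg])

lemma prod_of_bool: "finite Q \<Longrightarrow> (\<Prod>f\<in>Q. (of_bool (X f) :: real)) = of_bool (\<forall>f\<in>Q. X f)"
  by (induction Q rule: finite_induct) auto

lemma expect_ind:
  assumes "Q \<subseteq> pairs_n n" "0 \<le> p" "p \<le> 1"
  shows "measure_pmf.expectation (rg_pmf n p) (\<lambda>X. of_bool (\<forall>f\<in>Q. X f)) = p ^ card Q"
proof -
  have finQ: "finite Q" using assms(1) finite_pairs_n finite_subset by blast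
  have eq: "(of_bool (\<forall>f\<in>Q. X f) :: real) = (\<Prod>f\<in>pairs_n n. if f \<in> Q then of_bool (X f) else 1)" for X
  proof -
    have "(\<Prod>f\<in>pairs_n n. (if f \<in> Q then of_bool (X f) else 1) :: real) = (\<Prod>f\<in>pairs_n n \<inter> {f. f \<in> Q}. of_bool (X f))"
      by (subst prod.If_cases[OF finite_pairs_n]) simp
    also have "pairs_n n \<inter> {f. f \<in> Q} = Q" using assms(1) by auto
    finally show ?thesis using prod_of_bool[OF finQ] by simp
  qed
  have "measure_pmf.expectation (rg_pmf n p) (\<lambda>X. (of_bool (\<forall>f\<in>Q. X f) :: real))
      = measure_pmf.expectation (Pi_pmf (pairs_n n) False (\<lambda>_. bernoulli_pmf p)) (\<lambda>X. \<Prod>f\<in>pairs_n n. (\<lambda>f b. if f \<in> Q then of_bool b else 1) f (X f))"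
    unfolding rg_pmf_def by (simp only: eq)
  also have "\<dots> = (\<Prod>f\<in>pairs_n n. measure_pmf.expectation (bernoulli_pmf p) (\<lambda>b. (if f \<in> Q then of_bool b else 1)))"
    by (rule expectation_prod_Pi_pmf[OF finite_pairs_n])
       (auto intro: integrable_measure_pmf_finite)
  also have "\<dots> = (\<Prod>f\<in>pairs_n n. (if f \<in> Q then p else 1))"
    using assms(2,3) by (intro prod.cong refl) auto
  also have "\<dots> = p ^ card Q"
    using assms(1) by (subst prod.If_cases[OF finite_pairs_n]) (simp add: Int_absorb1 inf.absorb2)
  finally show ?thesis .
qed

definition goodQ :: "nat \<Rightarrow> nat \<Rightarrow> nat \<Rightarrow> nat \<Rightarrow> nat set set \<Rightarrow> bool" where
  "goodQ n m v j Q \<longleftrightarrow> finite Q \<and> Q \<subseteq> pairs_n n \<and> card Q \<le> j * m \<and> (\<forall>x. card {f\<in>Q. x \<in> f} \<le> j * v)"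

lemma goodQ_Un:
  assumes "goodQ n m v j Q" "goodQ n m v 1 Q'"
  shows "goodQ n m v (Suc j) (Q \<union> Q')"
proof -
  have "card (Q \<union> Q') \<le> card Q + card Q'" by (rule card_Un_le)
  also have "\<dots> \<le> j * m + m" using assms unfolding goodQ_def by (intro add_mono) auto
  finally have c: "card (Q \<union> Q') \<le> Suc j * m" by simp
  have d: "card {f\<in>Q \<union> Q'. x \<in> f} \<le> Suc j * v" for x
  proof -
    have "{f\<in>Q \<union> Q'. x \<in> f} = {f\<in>Q. x \<in> f} \<union> {f\<in>Q'. x \<in> f}" by auto
    then have "card {f\<in>Q \<union> Q'. x \<in> f} \<le> card {f\<in>Q. x \<in> f} + card {f\<in>Q'. x \<in> f}"
      by (metis card_Un_le)
    also have "\<dots> \<le> j * v + v"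
    proof (rule add_mono)
      show "card {f\<in>Q. x \<in> f} \<le> j * v" using assms(1) unfolding goodQ_def by blast
      show "card {f\<in>Q'. x \<in> f} \<le> v" using assms(2) unfolding goodQ_def by simp
    qed
    finally show ?thesis by simp
  qed
  show ?thesis using assms c d unfolding goodQ_def by auto
qed

lemma moment_bound:
  fixes Rs :: "(nat \<Rightarrow> nat) set" and F :: "nat set set" and B p :: real
  assumes finRs: "finite Rs"
    and img: "\<And>\<phi>. \<phi> \<in> Rs \<Longrightarrow> goodQ n m v 1 ((\<lambda>e. \<phi> ` e) ` F)"
    and step: "\<And>Q. finite Q \<Longrightarrow> Q \<subseteq> pairs_n n \<Longrightarrow> card Q \<le> t * m \<Longrightarrow> (\<forall>x. card {f\<in>Q. x \<in> f} \<le> t * v) \<Longrightarrow>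
                 (\<Sum>\<phi>\<in>Rs. p ^ card ((\<lambda>e. \<phi> ` e) ` F - Q)) \<le> B"
    and p: "0 \<le> p" "p \<le> 1"
  shows "j + k \<le> t \<Longrightarrow> goodQ n m v j Q \<Longrightarrow>
    measure_pmf.expectation (rg_pmf n p)
      (\<lambda>X. real (card {\<phi>\<in>Rs. \<forall>e\<in>F. X (\<phi> ` e)}) ^ k * of_bool (\<forall>f\<in>Q. X f)) \<le> B ^ k * p ^ card Q"
proof (induction k arbitrary: j Q)
  case 0
  then show ?case using expect_ind[OF _ p] by (simp add: goodQ_def)
next
  case (Suc k)
  let ?E = "measure_pmf.expectation (rg_pmf n p)"
  let ?N = "\<lambda>X. real (card {\<phi>\<in>Rs. \<forall>e\<in>F. X (\<phi> ` e)})"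
  let ?img = "\<lambda>\<phi>. (\<lambda>e. \<phi> ` e) ` F"
  have Nsum: "?N X = (\<Sum>\<phi>\<in>Rs. of_bool (\<forall>e\<in>F. X (\<phi> ` e)))" for X
  proof -
    have "{\<phi>\<in>Rs. \<forall>e\<in>F. X (\<phi> ` e)} = Rs \<inter> {\<phi>. \<forall>e\<in>F. X (\<phi> ` e)}" by blast
    then show ?thesis using finRs by simp
  qed
  have ind: "of_bool (\<forall>e\<in>F. X (\<phi> ` e)) * of_bool (\<forall>f\<in>Q. X f) = (of_bool (\<forall>f\<in>Q \<union> ?img \<phi>. X f) :: real)" for X \<phi>
    by auto
  have "?E (\<lambda>X. ?N X ^ Suc k * of_bool (\<forall>f\<in>Q. X f))
      = ?E (\<lambda>X. \<Sum>\<phi>\<in>Rs. ?N X ^ k * of_bool (\<forall>f\<in>Q \<union> ?img \<phi>. X f))"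
  proof -
    have "?N X ^ Suc k * of_bool (\<forall>f\<in>Q. X f) = (\<Sum>\<phi>\<in>Rs. ?N X ^ k * of_bool (\<forall>f\<in>Q \<union> ?img \<phi>. X f))" for X
    proof -
      have "?N X ^ Suc k * of_bool (\<forall>f\<in>Q. X f) = ?N X ^ k * (?N X * of_bool (\<forall>f\<in>Q. X f))" by simp
      also have "?N X * of_bool (\<forall>f\<in>Q. X f) = (\<Sum>\<phi>\<in>Rs. of_bool (\<forall>f\<in>Q \<union> ?img \<phi>. X f))"
        unfolding Nsum sum_distrib_right ind ..
      finally show ?thesis by (simp add: sum_distrib_left)
    qed
    then show ?thesis by simp
  qed
  also have "\<dots> = (\<Sum>\<phi>\<in>Rs. ?E (\<lambda>X. ?N X ^ k * of_bool (\<forall>f\<in>Q \<union> ?img \<phi>. X f)))"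
    by (rule Bochner_Integration.integral_sum) (rule integrable_rg)
  also have "\<dots> \<le> (\<Sum>\<phi>\<in>Rs. B ^ k * p ^ card (Q \<union> ?img \<phi>))"
  proof (rule sum_mono)
    fix \<phi> assume "\<phi> \<in> Rs"
    have "goodQ n m v (Suc j) (Q \<union> ?img \<phi>)" by (rule goodQ_Un[OF Suc.prems(2) img[OF \<open>\<phi> \<in> Rs\<close>]])
    then show "?E (\<lambda>X. ?N X ^ k * of_bool (\<forall>f\<in>Q \<union> ?img \<phi>. X f)) \<le> B ^ k * p ^ card (Q \<union> ?img \<phi>)"
      using Suc.prems(1) by (intro Suc.IH) auto
  qed
  also have "\<dots> = B ^ k * p ^ card Q * (\<Sum>\<phi>\<in>Rs. p ^ card (?img \<phi> - Q))"
  proof -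
    have "card (Q \<union> ?img \<phi>) = card Q + card (?img \<phi> - Q)" if "\<phi> \<in> Rs" for \<phi>
    proof -
      have "Q \<union> ?img \<phi> = Q \<union> (?img \<phi> - Q)" by auto
      moreover have "finite Q" using Suc.prems(2) by (simp add: goodQ_def)
      moreover have "finite (?img \<phi>)" using img[OF that] by (simp add: goodQ_def)
      ultimately show ?thesis using card_Un_disjoint[of Q "?img \<phi> - Q"] by auto
    qed
    then show ?thesis by (simp add: sum_distrib_left power_add mult.assoc)
  qed
  also have "\<dots> \<le> B ^ k * p ^ card Q * B"
  proof (rule mult_left_mono)
    have g: "goodQ n m v j Q" by (rule Suc.prems(2))
    have jt: "j \<le> t" using Suc.prems(1) by simp
    show "(\<Sum>\<phi>\<in>Rs. p ^ card (?img \<phi> - Q)) \<le> B"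
    proof (rule step)
      show "finite Q" using g by (simp add: goodQ_def)
      show "Q \<subseteq> pairs_n n" using g by (simp add: goodQ_def)
      show "card Q \<le> t * m" using g jt by (auto simp: goodQ_def intro: le_trans mult_le_mono1)
      show "\<forall>x. card {f\<in>Q. x \<in> f} \<le> t * v" using g jt by (auto simp: goodQ_def intro: le_trans mult_le_mono1)
    qed
    show "0 \<le> B ^ k * p ^ card Q"
    proof -
      have "0 \<le> (\<Sum>\<phi>\<in>Rs. p ^ card (?img \<phi> - Q))" using p by (intro sum_nonneg) auto
      then have "0 \<le> B" using \<open>(\<Sum>\<phi>\<in>Rs. p ^ card (?img \<phi> - Q)) \<le> B\<close> by linarith
      then show ?thesis using p by simp
    qed
  qed
  finally show ?case by (simp add: mult.commute mult.left_commute)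
qed

lemma power_sum_le:
  fixes a :: "'a \<Rightarrow> real"
  assumes fin: "finite I" and ne: "I \<noteq> {}" and nn: "\<And>i. i \<in> I \<Longrightarrow> a i \<ge> 0"
  shows "(\<Sum>i\<in>I. a i) ^ t \<le> real (card I) ^ t * (\<Sum>i\<in>I. a i ^ t)"
proof -
  have "Max (a ` I) \<in> a ` I" using fin ne by (intro Max_in) auto
  then obtain i0 where i0: "i0 \<in> I" "a i0 = Max (a ` I)" by auto
  have le: "a i \<le> a i0" if "i \<in> I" for i using i0 that fin by auto
  have "(\<Sum>i\<in>I. a i) \<le> (\<Sum>i\<in>I. a i0)" by (intro sum_mono le)
  also have "\<dots> = real (card I) * a i0" by simp
  finally have "(\<Sum>i\<in>I. a i) ^ t \<le> (real (card I) * a i0) ^ t"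
    by (intro power_mono) (auto intro!: sum_nonneg nn)
  also have "\<dots> = real (card I) ^ t * a i0 ^ t" by (simp add: power_mult_distrib)
  also have "\<dots> \<le> real (card I) ^ t * (\<Sum>i\<in>I. a i ^ t)"
    by (intro mult_left_mono member_le_sum[OF i0(1)]) (auto intro!: nn fin zero_le_power)
  finally show ?thesis .
qed

context
  fixes n :: nat and \<tau> :: shape
  assumes simple: "simple_shape \<tau>"
begin

abbreviation "VV \<equiv> sV \<tau>"
abbreviation "EE \<equiv> sE \<tau>"
abbreviation "ZZ \<equiv> set (sU \<tau>) \<inter> set (sW \<tau>)"
abbreviation "RR \<equiv> realizations n \<tau>"

lemma isshp: "is_shape \<tau>" using simple by (simp add: simple_shape_def)
lemma finVV: "finite VV" using isshp by (simp add: is_shape_def)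
lemma edge: "e \<in> EE \<Longrightarrow> card e = 2 \<and> e \<subseteq> VV" using isshp unfolding is_shape_def by blast
lemma finEE: "finite EE"
proof (rule finite_subset[of _ "Pow VV"])
  show "EE \<subseteq> Pow VV" using edge by blast
qed (simp add: finVV)
lemma ZV: "ZZ \<subseteq> VV" using isshp unfolding is_shape_def by blast

lemma m_le: "card EE \<le> card VV ^ 2"
proof -
  have "EE \<subseteq> (\<lambda>(a, b). {a, b}) ` (VV \<times> VV)"
  proof
    fix e assume e: "e \<in> EE"
    then obtain a b where "e = {a, b}" using edge by (meson card_2_iff)
    then show "e \<in> (\<lambda>(a, b). {a, b}) ` (VV \<times> VV)" using edge[OF e] by auto
  qed
  then have "card EE \<le> card ((\<lambda>(a, b). {a, b}) ` (VV \<times> VV))"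
    by (intro card_mono) (auto simp: finVV)
  also have "\<dots> \<le> card (VV \<times> VV)" by (rule card_image_le) (simp add: finVV)
  finally show ?thesis by (simp add: card_cartesian_product power2_eq_square)
qed

lemma realD: "\<phi> \<in> RR \<Longrightarrow> inj_on \<phi> VV \<and> \<phi> \<in> VV \<rightarrow>\<^sub>E {..<n}"
  by (simp add: realizations_def)

lemma img_inj: "\<phi> \<in> RR \<Longrightarrow> inj_on (\<lambda>e. \<phi> ` e) EE"
proof (rule inj_onI)
  fix e e' assume a: "\<phi> \<in> RR" "e \<in> EE" "e' \<in> EE" "\<phi> ` e = \<phi> ` e'"
  have "inj_on \<phi> VV" using realD[OF a(1)] by blast
  then show "e = e'" using inj_on_image_eq_iff[of \<phi> VV e e'] edge[OF a(2)] edge[OF a(3)] a(4) by blast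
qed

lemma img_good:
  assumes "\<phi> \<in> RR" "F \<subseteq> EE"
  shows "goodQ n (card EE) (card VV) 1 ((\<lambda>e. \<phi> ` e) ` F)"
proof -
  have inj: "inj_on \<phi> VV" and pi: "\<phi> \<in> VV \<rightarrow>\<^sub>E {..<n}" using realD[OF assms(1)] by auto
  have finF: "finite F" using assms(2) finEE finite_subset by blast
  have sub: "(\<lambda>e. \<phi> ` e) ` F \<subseteq> pairs_n n"
  proof
    fix f assume "f \<in> (\<lambda>e. \<phi> ` e) ` F"
    then obtain e where e: "e \<in> F" "f = \<phi> ` e" by auto
    have ee: "card e = 2" "e \<subseteq> VV" using edge e assms(2) by auto
    have "card f = 2" using ee e(2) card_image[OF inj_on_subset[OF inj ee(2)]] by simp
    moreover have "f \<subseteq> {..<n}" using pi ee e(2) by auto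
    ultimately show "f \<in> pairs_n n" by (simp add: pairs_n_def)
  qed
  have c: "card ((\<lambda>e. \<phi> ` e) ` F) \<le> card EE"
    by (rule le_trans[OF card_image_le[OF finF] card_mono[OF finEE assms(2)]])
  have d: "card {f\<in>(\<lambda>e. \<phi> ` e) ` F. x \<in> f} \<le> card VV" for x
  proof -
    have "{f\<in>(\<lambda>e. \<phi> ` e) ` F. x \<in> f} \<subseteq> (\<lambda>b. {x, \<phi> b}) ` VV"
    proof
      fix f assume f: "f \<in> {f\<in>(\<lambda>e. \<phi> ` e) ` F. x \<in> f}"
      then obtain e where e: "e \<in> F" "f = \<phi> ` e" "x \<in> f" by auto
      obtain a b where ab: "e = {a, b}" using edge e assms(2) by (meson card_2_iff subsetD)
      have "a \<in> VV" "b \<in> VV" using edge e assms(2) ab by auto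
      then show "f \<in> (\<lambda>b. {x, \<phi> b}) ` VV" using e ab by (auto simp: insert_commute)
    qed
    then have "card {f\<in>(\<lambda>e. \<phi> ` e) ` F. x \<in> f} \<le> card ((\<lambda>b. {x, \<phi> b}) ` VV)"
      by (intro card_mono) (auto simp: finVV)
    also have "\<dots> \<le> card VV" by (rule card_image_le[OF finVV])
    finally show ?thesis .
  qed
  show ?thesis unfolding goodQ_def using finF sub c d by auto
qed

lemma count_Rs:
  assumes Rs: "Rs \<subseteq> RR" and agree: "\<And>\<phi> \<psi> z. \<phi> \<in> Rs \<Longrightarrow> \<psi> \<in> Rs \<Longrightarrow> z \<in> ZZ \<Longrightarrow> \<phi> z = \<psi> z"
    and H: "H \<subseteq> EE"
    and Q: "finite Q" "\<forall>f\<in>Q. card f = 2" "card Q \<le> t * card EE" "\<forall>x. card {f\<in>Q. x \<in> f} \<le> t * card VV"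
    and t: "t \<ge> 1"
  shows "real (card (Rs \<inter> {\<phi>. \<forall>e\<in>H. \<phi> ` e \<in> Q}))
     \<le> real n ^ card ((VV - ZZ) - \<Union>H) * (4 * real t) ^ card H * real (card VV) ^ card ((VV - ZZ) \<inter> \<Union>H)"
proof (cases "Rs = {}")
  case True
  then show ?thesis by simp
next
  case False
  then obtain \<phi>0 where \<phi>0: "\<phi>0 \<in> Rs" by auto
  let ?A = "VV - ZZ"
  let ?S = "Rs \<inter> {\<phi>. \<forall>e\<in>H. \<phi> ` e \<in> Q}"
  have finH: "finite H" using H finEE finite_subset by blast
  have mg_eq: "mg ?A \<phi>0 (restrict \<phi> ?A) ` e = \<phi> ` e" if "\<phi> \<in> Rs" "e \<subseteq> VV" for \<phi> e
    using that agree[OF that(1) \<phi>0] by (force simp: mg_def image_def)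
  have inj: "inj_on (\<lambda>\<phi>. restrict \<phi> ?A) ?S"
  proof (rule inj_onI)
    fix \<phi> \<psi> assume a: "\<phi> \<in> ?S" "\<psi> \<in> ?S" "restrict \<phi> ?A = restrict \<psi> ?A"
    show "\<phi> = \<psi>"
    proof
      fix x
      show "\<phi> x = \<psi> x"
      proof (cases "x \<in> VV")
        case True
        show ?thesis
        proof (cases "x \<in> ZZ")
          case True
          then show ?thesis using agree a by auto
        next
          case False
          then show ?thesis using a(3) \<open>x \<in> VV\<close> by (metis Diff_iff restrict_apply')
        qed
      next
        case False
        have "\<phi> \<in> RR" "\<psi> \<in> RR" using a Rs by auto
        then have "\<phi> x = undefined" "\<psi> x = undefined"
          using realD False by (meson PiE_arb)+
        then show ?thesis by simp
      qed
    qed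
  qed
  have img: "(\<lambda>\<phi>. restrict \<phi> ?A) ` ?S \<subseteq> hset n \<phi>0 Q ?A H"
  proof
    fix \<psi> assume "\<psi> \<in> (\<lambda>\<phi>. restrict \<phi> ?A) ` ?S"
    then obtain \<phi> where \<phi>: "\<phi> \<in> ?S" "\<psi> = restrict \<phi> ?A" by auto
    have "\<psi> \<in> ?A \<rightarrow>\<^sub>E {..<n}" using \<phi> Rs realD by auto
    moreover have "\<forall>e\<in>H. mg ?A \<phi>0 \<psi> ` e \<in> Q"
      using \<phi> mg_eq edge H by auto
    ultimately show "\<psi> \<in> hset n \<phi>0 Q ?A H" by (simp add: hset_def)
  qed
  have "card ?S \<le> card (hset n \<phi>0 Q ?A H)"
    by (rule card_inj_on_le[OF inj img finite_hset]) (use finVV in auto)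
  then have "real (card ?S) \<le> real (card (hset n \<phi>0 Q ?A H))" by simp
  also have "\<dots> \<le> real n ^ card (?A - \<Union>H) * (4 * real t) ^ card H * real (card VV) ^ card (?A \<inter> \<Union>H)"
  proof (rule count_hom[where L = "t * card EE" and D = "t * card VV"])
    show "finite H" by (rule finH)
    show "\<forall>e\<in>H. card e = 2" using H edge by auto
    show "real (t * card VV) \<le> real t * real (card VV)" by simp
    show "real (t * card EE) \<le> real t * real (card VV) ^ 2"
      using m_le by (simp add: mult_left_mono)
    show "finite ?A" using finVV by simp
  qed (use Q t in auto)
  finally show ?thesis .
qed


definition cntb :: "nat \<Rightarrow> nat \<Rightarrow> nat set set \<Rightarrow> real" where
  "cntb t n' H = real n' ^ card ((VV - ZZ) - \<Union>H) * (4 * real t) ^ card H * real (card VV) ^ card ((VV - ZZ) \<inter> \<Union>H)"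

lemma step_bound:
  assumes Rs: "Rs \<subseteq> RR" and agree: "\<And>\<phi> \<psi> z. \<phi> \<in> Rs \<Longrightarrow> \<psi> \<in> Rs \<Longrightarrow> z \<in> ZZ \<Longrightarrow> \<phi> z = \<psi> z"
    and F: "F \<subseteq> EE"
    and Q: "finite Q" "Q \<subseteq> pairs_n n" "card Q \<le> t * card EE" "\<forall>x. card {f\<in>Q. x \<in> f} \<le> t * card VV"
    and t: "t \<ge> 1" and p: "0 \<le> (p::real)"
  shows "(\<Sum>\<phi>\<in>Rs. p ^ card ((\<lambda>e. \<phi> ` e) ` F - Q)) \<le> (\<Sum>H\<in>Pow F. p ^ card (F - H) * cntb t n H)"
proof -
  have finF: "finite F" using F finEE finite_subset by blast
  have finRs: "finite Rs" using Rs finite_realizations[OF finVV] finite_subset by blast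
  have Q2: "\<forall>f\<in>Q. card f = 2" using Q(2) by (auto simp: pairs_n_def)
  have per: "p ^ card ((\<lambda>e. \<phi> ` e) ` F - Q) \<le> (\<Sum>H\<in>Pow F. of_bool (\<forall>e\<in>H. \<phi> ` e \<in> Q) * p ^ card (F - H))"
    if "\<phi> \<in> Rs" for \<phi>
  proof -
    let ?H = "{e\<in>F. \<phi> ` e \<in> Q}"
    have "(\<lambda>e. \<phi> ` e) ` F - Q = (\<lambda>e. \<phi> ` e) ` (F - ?H)" by auto
    moreover have "inj_on (\<lambda>e. \<phi> ` e) (F - ?H)"
      using img_inj[of \<phi>] Rs that F by (meson Diff_subset inj_on_subset subsetD)
    ultimately have "card ((\<lambda>e. \<phi> ` e) ` F - Q) = card (F - ?H)" by (simp add: card_image)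
    then have "p ^ card ((\<lambda>e. \<phi> ` e) ` F - Q) = of_bool (\<forall>e\<in>?H. \<phi> ` e \<in> Q) * p ^ card (F - ?H)" by simp
    also have "\<dots> \<le> (\<Sum>H\<in>Pow F. of_bool (\<forall>e\<in>H. \<phi> ` e \<in> Q) * p ^ card (F - H))"
      by (rule member_le_sum[where f = "\<lambda>H. of_bool (\<forall>e\<in>H. \<phi> ` e \<in> Q) * p ^ card (F - H)"])
         (use finF p in auto)
    finally show ?thesis .
  qed
  have "(\<Sum>\<phi>\<in>Rs. p ^ card ((\<lambda>e. \<phi> ` e) ` F - Q))
      \<le> (\<Sum>\<phi>\<in>Rs. \<Sum>H\<in>Pow F. of_bool (\<forall>e\<in>H. \<phi> ` e \<in> Q) * p ^ card (F - H))"
    by (intro sum_mono per)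
  also have "\<dots> = (\<Sum>H\<in>Pow F. \<Sum>\<phi>\<in>Rs. of_bool (\<forall>e\<in>H. \<phi> ` e \<in> Q) * p ^ card (F - H))"
    by (rule sum.swap)
  also have "\<dots> = (\<Sum>H\<in>Pow F. p ^ card (F - H) * real (card (Rs \<inter> {\<phi>. \<forall>e\<in>H. \<phi> ` e \<in> Q})))"
  proof (intro sum.cong refl)
    fix H
    have "(\<Sum>\<phi>\<in>Rs. of_bool (\<forall>e\<in>H. \<phi> ` e \<in> Q) * p ^ card (F - H)) = (\<Sum>\<phi>\<in>Rs. of_bool (\<forall>e\<in>H. \<phi> ` e \<in> Q)) * p ^ card (F - H)"
      by (simp add: sum_distrib_right)
    also have "(\<Sum>\<phi>\<in>Rs. (of_bool (\<forall>e\<in>H. \<phi> ` e \<in> Q) :: real)) = real (card (Rs \<inter> {\<phi>. \<forall>e\<in>H. \<phi> ` e \<in> Q}))"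
      using finRs by simp
    finally show "(\<Sum>\<phi>\<in>Rs. of_bool (\<forall>e\<in>H. \<phi> ` e \<in> Q) * p ^ card (F - H)) = p ^ card (F - H) * real (card (Rs \<inter> {\<phi>. \<forall>e\<in>H. \<phi> ` e \<in> Q}))"
      by simp
  qed
  also have "\<dots> \<le> (\<Sum>H\<in>Pow F. p ^ card (F - H) * cntb t n H)"
  proof (intro sum_mono mult_left_mono)
    fix H assume "H \<in> Pow F"
    then have HE: "H \<subseteq> EE" using F by auto
    show "real (card (Rs \<inter> {\<phi>. \<forall>e\<in>H. \<phi> ` e \<in> Q})) \<le> cntb t n H"
      unfolding cntb_def by (rule count_Rs[where Rs=Rs and H=H and Q=Q and t=t]) (use Rs HE Q Q2 t in \<open>auto intro: agree\<close>)
    show "0 \<le> p ^ card (F - H)" using p by simp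
  qed
  finally show ?thesis .
qed

definition Mx :: "real \<Rightarrow> nat \<Rightarrow> real" where
  "Mx q n' = Max ((\<lambda>S. q ^ card (edges_in \<tau> S) * real n' ^ (card VV - card S)) ` {S. ZZ \<subseteq> S \<and> S \<subseteq> VV})"

lemma Mx_ge:
  assumes "ZZ \<subseteq> S" "S \<subseteq> VV"
  shows "q ^ card (edges_in \<tau> S) * real n' ^ (card VV - card S) \<le> Mx q n'"
  unfolding Mx_def using assms finVV by (intro Max_ge finite_imageI) (auto intro: finite_subset[of _ "Pow VV"])

lemma Bf_bound:
  assumes F: "F \<subseteq> EE" and p: "0 < p" "p \<le> 1/2" and t: "t \<ge> 1"
  shows "((1 - p) / p) ^ card F * (\<Sum>H\<in>Pow F. p ^ card (F - H) * cntb t n H)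
     \<le> 2 ^ card EE * ((4 * real t) ^ card EE * real (card VV) ^ card VV * Mx ((1 - p) / p) n)"
proof -
  define q where "q = (1 - p) / p"
  have q1: "q \<ge> 1" using p by (simp add: q_def field_simps)
  have qp: "q * p \<le> 1" using p by (simp add: q_def)
  have finF: "finite F" using F finEE finite_subset by blast
  have "q ^ card F * (\<Sum>H\<in>Pow F. p ^ card (F - H) * cntb t n H) = (\<Sum>H\<in>Pow F. q ^ card F * p ^ card (F - H) * cntb t n H)"
    by (simp add: sum_distrib_left mult.assoc)
  also have "\<dots> \<le> (\<Sum>H\<in>Pow F. (4 * real t) ^ card EE * real (card VV) ^ card VV * Mx q n)"
  proof (rule sum_mono)
    fix H assume H: "H \<in> Pow F"
    have HF: "H \<subseteq> F" using H by auto
    have finH: "finite H" using HF finF finite_subset by blast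
    have c0: "cntb t n H \<ge> 0" unfolding cntb_def by simp
    have "card F = card H + card (F - H)" using HF finF by (metis card_Diff_subset card_mono le_add_diff_inverse finH)
    then have "q ^ card F * p ^ card (F - H) = q ^ card H * (q * p) ^ card (F - H)"
      by (simp add: power_add power_mult_distrib)
    also have "\<dots> \<le> q ^ card H" using qp q1 p
      by (intro mult_left_le power_le_one) (auto simp: q_def)
    finally have e1: "q ^ card F * p ^ card (F - H) \<le> q ^ card H" .
    define S where "S = ZZ \<union> \<Union>H"
    have HE: "H \<subseteq> EE" using HF F by auto
    have SV: "S \<subseteq> VV" using HE edge ZV by (auto simp: S_def)
    have ZS: "ZZ \<subseteq> S" by (simp add: S_def)
    have finS: "finite S" using SV finVV finite_subset by blast
    have HES: "H \<subseteq> edges_in \<tau> S" using HE by (auto simp: edges_in_def S_def)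
    have finES: "finite (edges_in \<tau> S)" using finEE by (simp add: edges_in_def)
    have "q ^ card H \<le> q ^ card (edges_in \<tau> S)"
      using q1 card_mono[OF finES HES] by (rule power_increasing[rotated])
    note i1 = this
    have i0: "card ((VV - ZZ) - \<Union>H) = card VV - card S"
    proof -
      have "(VV - ZZ) - \<Union>H = VV - S" by (auto simp: S_def)
      then show ?thesis using card_Diff_subset[OF finS SV] by simp
    qed
    have i2: "(4 * real t) ^ card H \<le> (4 * real t) ^ card EE"
      using t card_mono[OF finEE HE] by (intro power_increasing) auto
    have i3: "real (card VV) ^ card ((VV - ZZ) \<inter> \<Union>H) \<le> real (card VV) ^ card VV"
    proof (cases "card VV = 0")
      case True
      then have "VV = {}" using finVV by simp
      then show ?thesis by simp
    next
      case False
      have "card ((VV - ZZ) \<inter> \<Union>H) \<le> card VV" by (rule card_mono[OF finVV]) auto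
      then show ?thesis using False by (intro power_increasing) auto
    qed
    have "q ^ card H * ((4 * real t) ^ card H * real (card VV) ^ card ((VV - ZZ) \<inter> \<Union>H))
        \<le> q ^ card (edges_in \<tau> S) * ((4 * real t) ^ card EE * real (card VV) ^ card VV)"
      using q1 by (intro mult_mono i1 i2 i3) auto
    then have "real n ^ (card VV - card S) * (q ^ card H * ((4 * real t) ^ card H * real (card VV) ^ card ((VV - ZZ) \<inter> \<Union>H)))
        \<le> real n ^ (card VV - card S) * (q ^ card (edges_in \<tau> S) * ((4 * real t) ^ card EE * real (card VV) ^ card VV))"
      by (rule mult_left_mono) simp
    then have "q ^ card H * cntb t n H \<le> q ^ card (edges_in \<tau> S) * ((4 * real t) ^ card EE * real (card VV) ^ card VV * real n ^ (card VV - card S))"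
      unfolding cntb_def i0 by (simp add: ac_simps)
    also have "\<dots> = (4 * real t) ^ card EE * real (card VV) ^ card VV * (q ^ card (edges_in \<tau> S) * real n ^ (card VV - card S))"
      by (simp add: algebra_simps)
    also have "\<dots> \<le> (4 * real t) ^ card EE * real (card VV) ^ card VV * Mx q n"
      by (intro mult_left_mono Mx_ge[OF ZS SV]) auto
    finally have e2: "q ^ card H * cntb t n H \<le> (4 * real t) ^ card EE * real (card VV) ^ card VV * Mx q n" .
    have "q ^ card F * p ^ card (F - H) * cntb t n H \<le> q ^ card H * cntb t n H"
      by (rule mult_right_mono[OF e1 c0])
    with e2 show "q ^ card F * p ^ card (F - H) * cntb t n H \<le> (4 * real t) ^ card EE * real (card VV) ^ card VV * Mx q n"
      by linarith
  qed
  also have "\<dots> = real (card (Pow F)) * ((4 * real t) ^ card EE * real (card VV) ^ card VV * Mx q n)"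
    by simp
  also have "\<dots> \<le> 2 ^ card EE * ((4 * real t) ^ card EE * real (card VV) ^ card VV * Mx q n)"
  proof (rule mult_right_mono)
    have "card (Pow F) = 2 ^ card F" using finF by (simp add: card_Pow)
    moreover have "card F \<le> card EE" using card_mono[OF finEE F] .
    ultimately show "real (card (Pow F)) \<le> 2 ^ card EE"
      by (metis of_nat_le_iff of_nat_numeral of_nat_power power_increasing one_le_numeral)
    have "Mx q n \<ge> 0"
      using Mx_ge[of ZZ q n] ZV q1 by (meson order_trans zero_le_mult_iff zero_le_power of_nat_0_le_iff order_refl le_numeral_extra(1) zero_le_one dual_order.trans)
    then show "0 \<le> (4 * real t) ^ card EE * real (card VV) ^ card VV * Mx q n" by simp
  qed
  finally show ?thesis by (simp add: q_def)
qed


lemma Gval_sq: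
  assumes "0 < p" "p \<le> 1/2"
  shows "(Gval p X f)^2 \<le> (if X f then (1 - p) / p else 1)"
proof -
  have "0 \<le> (1 - p) / p" using assms by simp
  moreover have "p / (1 - p) \<le> 1" using assms by (simp add: field_simps)
  moreover have "0 \<le> p / (1 - p)" using assms by simp
  ultimately show ?thesis by (auto simp: Gval_def)
qed

lemma wt_sq:
  assumes p: "0 < p" "p \<le> 1/2"
  shows "(\<Prod>e\<in>EE. Gval p X (\<phi> ` e))^2 \<le> (\<Sum>F\<in>Pow EE. of_bool (\<forall>e\<in>F. X (\<phi> ` e)) * ((1 - p) / p) ^ card F)"
proof -
  define q where "q = (1 - p) / p"
  have q0: "q \<ge> 0" using p by (simp add: q_def)
  have "(\<Prod>e\<in>EE. Gval p X (\<phi> ` e))^2 = (\<Prod>e\<in>EE. (Gval p X (\<phi> ` e))^2)"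
    by (rule prod_power_distrib)
  also have "\<dots> \<le> (\<Prod>e\<in>EE. if X (\<phi> ` e) then q else 1)"
  proof (rule prod_mono)
    fix e assume "e \<in> EE"
    show "0 \<le> (Gval p X (\<phi> ` e))^2 \<and> (Gval p X (\<phi> ` e))^2 \<le> (if X (\<phi> ` e) then q else 1)"
      using Gval_sq[OF p, of X "\<phi> ` e"] unfolding q_def by simp
  qed
  also have "\<dots> = q ^ card (EE \<inter> {e. X (\<phi> ` e)})"
    by (subst prod.If_cases[OF finEE]) simp
  also have "\<dots> = of_bool (\<forall>e\<in>EE \<inter> {e. X (\<phi> ` e)}. X (\<phi> ` e)) * q ^ card (EE \<inter> {e. X (\<phi> ` e)})"
    by simp
  also have "\<dots> \<le> (\<Sum>F\<in>Pow EE. of_bool (\<forall>e\<in>F. X (\<phi> ` e)) * q ^ card F)"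
    by (rule member_le_sum[where f = "\<lambda>F. of_bool (\<forall>e\<in>F. X (\<phi> ` e)) * q ^ card F"])
       (use finEE q0 in auto)
  finally show ?thesis by (simp add: q_def)
qed

lemma sigma_bound:
  assumes Rs: "Rs \<subseteq> RR" and agree: "\<And>\<phi> \<psi> z. \<phi> \<in> Rs \<Longrightarrow> \<psi> \<in> Rs \<Longrightarrow> z \<in> ZZ \<Longrightarrow> \<phi> z = \<psi> z"
    and p: "0 < p" "p \<le> 1/2" and t: "t \<ge> 1"
  shows "measure_pmf.expectation (rg_pmf n p) (\<lambda>X. (\<Sum>\<phi>\<in>Rs. (\<Prod>e\<in>EE. Gval p X (\<phi> ` e))^2) ^ t)
    \<le> (32 * real t) ^ (card EE * t) * real (card VV) ^ (card VV * t) * Mx ((1 - p) / p) n ^ t"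
proof -
  define q where "q = (1 - p) / p"
  define m where "m = card EE"
  define v where "v = card VV"
  define N where "N F X = real (card {\<phi>\<in>Rs. \<forall>e\<in>F. X (\<phi> ` e)})" for F and X :: "nat set \<Rightarrow> bool"
  define Bf where "Bf F = (\<Sum>H\<in>Pow F. p ^ card (F - H) * cntb t n H)" for F
  define K where "K = (4 * real t) ^ m * real v ^ v * Mx q n"
  let ?E = "measure_pmf.expectation (rg_pmf n p)"
  have q1: "q \<ge> 1" using p by (simp add: q_def field_simps)
  have finRs: "finite Rs" using Rs finite_realizations[OF finVV] finite_subset by blast
  have Mx0: "Mx q n \<ge> 0"
  proof -
    have "0 \<le> q ^ card (edges_in \<tau> ZZ) * real n ^ (card VV - card ZZ)" using q1 by simp
    also have "\<dots> \<le> Mx q n" by (rule Mx_ge) (use ZV in auto)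
    finally show ?thesis .
  qed
  have K0: "K \<ge> 0" using Mx0 by (simp add: K_def)
  have Nset: "{\<phi>\<in>Rs. \<forall>e\<in>F. X (\<phi> ` e)} = Rs \<inter> {\<phi>. \<forall>e\<in>F. X (\<phi> ` e)}" for F X by blast
  have pw: "(\<Sum>\<phi>\<in>Rs. (\<Prod>e\<in>EE. Gval p X (\<phi> ` e))^2) ^ t \<le> (2 ^ m) ^ t * (\<Sum>F\<in>Pow EE. (q ^ card F * N F X) ^ t)" for X
  proof -
    have "(\<Sum>\<phi>\<in>Rs. (\<Prod>e\<in>EE. Gval p X (\<phi> ` e))^2) \<le> (\<Sum>\<phi>\<in>Rs. \<Sum>F\<in>Pow EE. of_bool (\<forall>e\<in>F. X (\<phi> ` e)) * q ^ card F)"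
      unfolding q_def by (intro sum_mono wt_sq p)
    also have "\<dots> = (\<Sum>F\<in>Pow EE. \<Sum>\<phi>\<in>Rs. of_bool (\<forall>e\<in>F. X (\<phi> ` e)) * q ^ card F)" by (rule sum.swap)
    also have "\<dots> = (\<Sum>F\<in>Pow EE. q ^ card F * N F X)"
    proof (intro sum.cong refl)
      fix F
      have "(\<Sum>\<phi>\<in>Rs. of_bool (\<forall>e\<in>F. X (\<phi> ` e)) * q ^ card F) = (\<Sum>\<phi>\<in>Rs. (of_bool (\<forall>e\<in>F. X (\<phi> ` e)) :: real)) * q ^ card F"
        by (simp add: sum_distrib_right)
      also have "(\<Sum>\<phi>\<in>Rs. (of_bool (\<forall>e\<in>F. X (\<phi> ` e)) :: real)) = N F X"
        using finRs by (simp add: N_def Nset)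
      finally show "(\<Sum>\<phi>\<in>Rs. of_bool (\<forall>e\<in>F. X (\<phi> ` e)) * q ^ card F) = q ^ card F * N F X" by simp
    qed
    finally have le1: "(\<Sum>\<phi>\<in>Rs. (\<Prod>e\<in>EE. Gval p X (\<phi> ` e))^2) \<le> (\<Sum>F\<in>Pow EE. q ^ card F * N F X)" .
    have "(\<Sum>\<phi>\<in>Rs. (\<Prod>e\<in>EE. Gval p X (\<phi> ` e))^2) ^ t \<le> (\<Sum>F\<in>Pow EE. q ^ card F * N F X) ^ t"
      by (intro power_mono le1 sum_nonneg) auto
    also have "\<dots> \<le> real (card (Pow EE)) ^ t * (\<Sum>F\<in>Pow EE. (q ^ card F * N F X) ^ t)"
      by (rule power_sum_le) (use finEE q1 in \<open>auto simp: N_def\<close>)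
    also have "real (card (Pow EE)) = 2 ^ m" using finEE by (simp add: card_Pow m_def)
    finally show ?thesis .
  qed
  have mom: "?E (\<lambda>X. N F X ^ t) \<le> Bf F ^ t" if F: "F \<subseteq> EE" for F
  proof -
    have "?E (\<lambda>X. real (card {\<phi>\<in>Rs. \<forall>e\<in>F. X (\<phi> ` e)}) ^ t * of_bool (\<forall>f\<in>{}. X f)) \<le> Bf F ^ t * p ^ card ({} :: nat set set)"
    proof (rule moment_bound[where m = m and v = v and t = t and j = 0])
      show "finite Rs" by (rule finRs)
      show "goodQ n m v 1 ((\<lambda>e. \<phi> ` e) ` F)" if "\<phi> \<in> Rs" for \<phi>
        unfolding m_def v_def using img_good[of \<phi> F] that Rs F by auto
      show "(\<Sum>\<phi>\<in>Rs. p ^ card ((\<lambda>e. \<phi> ` e) ` F - Q)) \<le> Bf F"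
        if "finite Q" "Q \<subseteq> pairs_n n" "card Q \<le> t * m" "\<forall>x. card {f\<in>Q. x \<in> f} \<le> t * v" for Q
        unfolding Bf_def by (rule step_bound[where Rs=Rs and F=F and Q=Q and t=t and p=p]) (use that p t Rs F in \<open>auto simp: m_def v_def intro: agree\<close>)
      show "0 \<le> p" "p \<le> 1" using p by auto
      show "0 + t \<le> t" by simp
      show "goodQ n m v 0 {}" by (simp add: goodQ_def)
    qed
    then show ?thesis by (simp add: N_def)
  qed
  have Bf0: "Bf F \<ge> 0" for F unfolding Bf_def cntb_def using p by (intro sum_nonneg) auto
  have "?E (\<lambda>X. (\<Sum>\<phi>\<in>Rs. (\<Prod>e\<in>EE. Gval p X (\<phi> ` e))^2) ^ t) \<le> ?E (\<lambda>X. (2 ^ m) ^ t * (\<Sum>F\<in>Pow EE. (q ^ card F * N F X) ^ t))"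
    by (intro integral_mono integrable_rg pw)
  also have "\<dots> = (2 ^ m) ^ t * (\<Sum>F\<in>Pow EE. (q ^ card F) ^ t * ?E (\<lambda>X. N F X ^ t))"
    by (simp add: Bochner_Integration.integral_sum integrable_rg power_mult_distrib)
  also have "\<dots> \<le> (2 ^ m) ^ t * (\<Sum>F\<in>Pow EE. (2 ^ m * K) ^ t)"
  proof (intro mult_left_mono sum_mono)
    fix F assume "F \<in> Pow EE"
    then have F: "F \<subseteq> EE" by auto
    have "(q ^ card F) ^ t * ?E (\<lambda>X. N F X ^ t) \<le> (q ^ card F) ^ t * Bf F ^ t"
      using q1 by (intro mult_left_mono mom F) auto
    also have "\<dots> = (q ^ card F * Bf F) ^ t" by (simp add: power_mult_distrib)
    also have "\<dots> \<le> (2 ^ m * K) ^ t"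
      using Bf_bound[OF F p t] q1 Bf0[of F]
      by (intro power_mono) (auto simp: Bf_def q_def K_def m_def v_def)
    finally show "(q ^ card F) ^ t * ?E (\<lambda>X. N F X ^ t) \<le> (2 ^ m * K) ^ t" .
  qed simp
  also have "\<dots> = (2 ^ m) ^ t * 2 ^ m * (2 ^ m * K) ^ t"
    using finEE by (simp add: card_Pow m_def)
  also have "\<dots> \<le> (2 ^ m) ^ t * (2 ^ m) ^ t * (2 ^ m * K) ^ t"
  proof -
    have "(2::real) ^ m \<le> (2 ^ m) ^ t" using t by (metis one_le_numeral one_le_power power_increasing power_one_right)
    then show ?thesis using K0 by (intro mult_right_mono mult_left_mono) auto
  qed
  also have "\<dots> = (32 * real t) ^ (m * t) * real v ^ (v * t) * Mx q n ^ t"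
  proof -
    define c :: real where "c = 2 ^ m"
    have e1: "c * c * c * (4 * real t) ^ m = (2 * 2 * 2 * (4 * real t)) ^ m"
      unfolding c_def by (simp only: power_mult_distrib)
    have e2: "(2::real) * 2 * 2 * (4 * real t) = 32 * real t" by simp
    have e3: "c ^ t * c ^ t * (c * K) ^ t = (c * c * c * K) ^ t"
      by (simp only: power_mult_distrib mult.assoc)
    have e4: "c * c * c * K = (c * c * c * (4 * real t) ^ m) * (real v ^ v * Mx q n)"
      unfolding K_def by (simp only: mult.assoc)
    have "c ^ t * c ^ t * (c * K) ^ t = ((32 * real t) ^ m * (real v ^ v * Mx q n)) ^ t"
      unfolding e3 e4 e1 e2 ..
    also have "\<dots> = (32 * real t) ^ (m * t) * real v ^ (v * t) * Mx q n ^ t"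
      by (simp only: power_mult_distrib power_mult mult.assoc)
    finally show ?thesis unfolding c_def .
  qed
  finally show ?thesis by (simp add: m_def v_def q_def)
qed

end

theorem mainTheorem20:
  "\<exists>C>0. \<forall>(n::nat) (p::real) (\<tau>::shape) (t::nat).
     0 < p \<and> p \<le> 1/2 \<and> simple_shape \<tau> \<and> even t \<and> t \<ge> 2 \<longrightarrow>
     measure_pmf.expectation (rg_pmf n p)
       (\<lambda>X. schatten_pow (tuples n) (graph_matrix n \<tau> (Gval p X)) t)
     \<le> (real n ^ card (sV \<tau>) * (C * real t) ^ (t * card (sE \<tau>))
          * real (card (sV \<tau>)) ^ (t * card (sV \<tau>)))
       * Max {((1 - p) / p) ^ (t * card (edges_in \<tau> S)) * real n ^ (t * (card (sV \<tau>) - card S)) | S.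
                set (sU \<tau>) \<inter> set (sW \<tau>) \<subseteq> S \<and> S \<subseteq> sV \<tau>}"
proof (intro exI[of _ 32] conjI allI impI)
  show "(0::real) < 32" by simp
  fix n :: nat and p :: real and \<tau> :: shape and t :: nat
  assume a: "0 < p \<and> p \<le> 1/2 \<and> simple_shape \<tau> \<and> even t \<and> t \<ge> 2"
  then have p: "0 < p" "p \<le> 1/2" and simple: "simple_shape \<tau>" and t: "t \<ge> 2" by auto
  define Z where "Z = set (sU \<tau>) \<inter> set (sW \<tau>)"
  define R where "R = realizations n \<tau>"
  define K where "K = keyf Z ` R"
  define q where "q = (1 - p) / p"
  define m where "m = card (sE \<tau>)"
  define v where "v = card (sV \<tau>)"
  define Bnd where "Bnd = (32 * real t) ^ (m * t) * real v ^ (v * t) * Mx \<tau> q n ^ t"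
  define Y where "Y \<sigma> X = (\<Sum>\<phi>\<in>{\<phi>\<in>R. keyf Z \<phi> = \<sigma>}. (\<Prod>e\<in>sE \<tau>. Gval p X (\<phi> ` e))^2) ^ t" for \<sigma> X
  let ?E = "measure_pmf.expectation (rg_pmf n p)"
  have finV: "finite (sV \<tau>)" using simple by (simp add: simple_shape_def is_shape_def)
  have finR: "finite R" unfolding R_def by (rule finite_realizations[OF finV])
  have "?E (\<lambda>X. schatten_pow (tuples n) (graph_matrix n \<tau> (Gval p X)) t) \<le> ?E (\<lambda>X. \<Sum>\<sigma>\<in>K. Y \<sigma> X)"
    unfolding K_def Y_def Z_def R_def
    by (intro integral_mono integrable_rg det_bound_glob[OF simple t])
  also have "\<dots> = (\<Sum>\<sigma>\<in>K. ?E (Y \<sigma>))"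
    by (rule Bochner_Integration.integral_sum) (rule integrable_rg)
  also have "\<dots> \<le> (\<Sum>\<sigma>\<in>K. Bnd)"
  proof (rule sum_mono)
    fix \<sigma> assume "\<sigma> \<in> K"
    have sub: "{\<phi>\<in>R. keyf Z \<phi> = \<sigma>} \<subseteq> realizations n \<tau>" by (auto simp: R_def)
    have agree: "\<phi> z = \<psi> z" if "\<phi> \<in> {\<phi>\<in>R. keyf Z \<phi> = \<sigma>}" "\<psi> \<in> {\<phi>\<in>R. keyf Z \<phi> = \<sigma>}"
      "z \<in> set (sU \<tau>) \<inter> set (sW \<tau>)" for \<phi> \<psi> z
    proof -
      have "keyf Z \<phi> z = keyf Z \<psi> z" using that by auto
      then show ?thesis using that(3) by (simp add: keyf_def Z_def)
    qed
    show "?E (Y \<sigma>) \<le> Bnd"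
      unfolding Y_def Bnd_def m_def v_def q_def
      by (rule sigma_bound[where \<tau> = \<tau> and Rs = "{\<phi>\<in>R. keyf Z \<phi> = \<sigma>}" and n = n and p = p and t = t])
         (use simple sub p t in \<open>auto intro: agree\<close>)
  qed
  also have "\<dots> = real (card K) * Bnd" by simp
  also have "\<dots> \<le> real n ^ v * Bnd"
  proof (rule mult_right_mono)
    have "card K \<le> card R" unfolding K_def by (rule card_image_le[OF finR])
    also have "\<dots> \<le> n ^ v" unfolding R_def v_def by (rule card_realizations[OF finV])
    finally show "real (card K) \<le> real n ^ v" by (metis of_nat_le_iff of_nat_power)
    have q1: "q \<ge> 1" using p by (simp add: q_def field_simps)
    have "0 \<le> q ^ card (edges_in \<tau> Z) * real n ^ (card (sV \<tau>) - card Z)" using q1 by simp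
    also have "\<dots> \<le> Mx \<tau> q n" unfolding Z_def
      by (rule Mx_ge[OF simple order_refl ZV[OF simple]])
    finally have M0: "0 \<le> Mx \<tau> q n" .
    have b1: "0 \<le> (32 * real t) ^ (m * t)" by simp
    have b2: "0 \<le> real v ^ (v * t)" by simp
    have b3: "0 \<le> Mx \<tau> q n ^ t" using M0 by simp
    show "0 \<le> Bnd" unfolding Bnd_def by (rule mult_nonneg_nonneg[OF mult_nonneg_nonneg[OF b1 b2] b3])
  qed
  also have "\<dots> \<le> (real n ^ card (sV \<tau>) * (32 * real t) ^ (t * card (sE \<tau>))
          * real (card (sV \<tau>)) ^ (t * card (sV \<tau>)))
       * Max {((1 - p) / p) ^ (t * card (edges_in \<tau> S)) * real n ^ (t * (card (sV \<tau>) - card S)) | S.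
                set (sU \<tau>) \<inter> set (sW \<tau>) \<subseteq> S \<and> S \<subseteq> sV \<tau>}"
  proof -
    define SS where "SS = {S. Z \<subseteq> S \<and> S \<subseteq> sV \<tau>}"
    define f where "f S = q ^ card (edges_in \<tau> S) * real n ^ (v - card S)" for S
    have finSS: "finite SS" unfolding SS_def by (rule finite_subset[of _ "Pow (sV \<tau>)"]) (auto simp: finV)
    have neSS: "SS \<noteq> {}" unfolding SS_def Z_def using ZV[OF simple] by blast
    have MxEq: "Mx \<tau> q n = Max (f ` SS)" unfolding Mx_def[OF simple] f_def SS_def Z_def v_def ..
    obtain S0 where S0: "S0 \<in> SS" "Mx \<tau> q n = f S0"
      using Max_in[OF finite_imageI[OF finSS]] neSS MxEq by auto
    have "Mx \<tau> q n ^ t = q ^ (t * card (edges_in \<tau> S0)) * real n ^ (t * (v - card S0))"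
    proof -
      have "(q ^ card (edges_in \<tau> S0) * real n ^ (v - card S0)) ^ t = (q ^ card (edges_in \<tau> S0)) ^ t * (real n ^ (v - card S0)) ^ t"
        by (rule power_mult_distrib)
      also have "\<dots> = q ^ (t * card (edges_in \<tau> S0)) * real n ^ (t * (v - card S0))"
        by (simp only: power_mult[symmetric] mult.commute)
      finally show ?thesis unfolding S0(2) f_def .
    qed
    also have "\<dots> \<le> Max {((1 - p) / p) ^ (t * card (edges_in \<tau> S)) * real n ^ (t * (card (sV \<tau>) - card S)) | S.
                set (sU \<tau>) \<inter> set (sW \<tau>) \<subseteq> S \<and> S \<subseteq> sV \<tau>}"
    proof (rule Max_ge)
      have "{((1 - p) / p) ^ (t * card (edges_in \<tau> S)) * real n ^ (t * (card (sV \<tau>) - card S)) | S.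
                set (sU \<tau>) \<inter> set (sW \<tau>) \<subseteq> S \<and> S \<subseteq> sV \<tau>}
            = (\<lambda>S. ((1 - p) / p) ^ (t * card (edges_in \<tau> S)) * real n ^ (t * (card (sV \<tau>) - card S))) ` SS"
        unfolding SS_def Z_def by auto
      then show "finite {((1 - p) / p) ^ (t * card (edges_in \<tau> S)) * real n ^ (t * (card (sV \<tau>) - card S)) | S.
                set (sU \<tau>) \<inter> set (sW \<tau>) \<subseteq> S \<and> S \<subseteq> sV \<tau>}"
        using finSS by simp
      show "q ^ (t * card (edges_in \<tau> S0)) * real n ^ (t * (v - card S0)) \<in> {((1 - p) / p) ^ (t * card (edges_in \<tau> S)) * real n ^ (t * (card (sV \<tau>) - card S)) | S.
                set (sU \<tau>) \<inter> set (sW \<tau>) \<subseteq> S \<and> S \<subseteq> sV \<tau>}"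
        using S0(1) unfolding SS_def Z_def q_def v_def by blast
    qed
    finally have MM: "Mx \<tau> q n ^ t \<le> Max {((1 - p) / p) ^ (t * card (edges_in \<tau> S)) * real n ^ (t * (card (sV \<tau>) - card S)) | S.
                set (sU \<tau>) \<inter> set (sW \<tau>) \<subseteq> S \<and> S \<subseteq> sV \<tau>}" .
    have "real n ^ v * Bnd = (real n ^ card (sV \<tau>) * (32 * real t) ^ (t * card (sE \<tau>))
          * real (card (sV \<tau>)) ^ (t * card (sV \<tau>))) * Mx \<tau> q n ^ t"
      unfolding Bnd_def m_def v_def by (simp only: mult.commute mult.left_commute mult.assoc)
    also have "\<dots> \<le> (real n ^ card (sV \<tau>) * (32 * real t) ^ (t * card (sE \<tau>))
          * real (card (sV \<tau>)) ^ (t * card (sV \<tau>))) * Max {((1 - p) / p) ^ (t * card (edges_in \<tau> S)) * real n ^ (t * (card (sV \<tau>) - card S)) | S.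
                set (sU \<tau>) \<inter> set (sW \<tau>) \<subseteq> S \<and> S \<subseteq> sV \<tau>}"
      by (rule mult_left_mono[OF MM]) simp
    finally show ?thesis .
  qed
  finally show "?E (\<lambda>X. schatten_pow (tuples n) (graph_matrix n \<tau> (Gval p X)) t)
     \<le> (real n ^ card (sV \<tau>) * (32 * real t) ^ (t * card (sE \<tau>))
          * real (card (sV \<tau>)) ^ (t * card (sV \<tau>)))
       * Max {((1 - p) / p) ^ (t * card (edges_in \<tau> S)) * real n ^ (t * (card (sV \<tau>) - card S)) | S.
                set (sU \<tau>) \<inter> set (sW \<tau>) \<subseteq> S \<and> S \<subseteq> sV \<tau>}" .
qed


end
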